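(* Let $k\ge 2$ and let $u(n)$ satisfy $u(n)\to\infty$ and $u(n)/n\to0$. For any constant $0<\mu<(k(k-1))^{-1}$ and any $\tau>\frac{k(k-1)\mu}{1-k(k-1)\mu}$, with probability tending to $1$ as $n\to\infty$ the random bipartite graph with $m=\lfloor\mu n\rfloor$ constraint vertices has a $k$-stopping set contained in $\{u(n)+1,\dots,n\}$ of size larger than $n-(1+\tau)u(n)$.
   Context: Random bipartite graph: variable vertices $[n]$, constraint vertices $[m]$; for each $a\in[m]$ independently, a $k$-tuple of pairwise distinct elements of $[n]$ is chosen uniformly among all $n(n-1)\cdots(n-k+1)$ such tuples, and $\partial(a)\subseteq[n]$ denotes the set of its entries. $d$-stopping set: a set $V'\subseteq[n]$ such that $|\partial(a)\cap V'|\notin\{1,2,\dots,d-1\}$ for every $a\in[m]$. *)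

theory Defs
  imports Complex_Main "HOL-Library.FuncSet"
begin

definition tuples :: "nat \<Rightarrow> nat \<Rightarrow> nat list set" where
  "tuples n k = {xs. length xs = k \<and> distinct xs \<and> set xs \<subseteq> {1..n}}"

text \<open>All configurations of the random bipartite graph: each constraint a in [m] = {1..m}
  is assigned a k-tuple of pairwise distinct variables; the uniform distribution on this
  finite set is the model of the paper.\<close>
definition configs :: "nat \<Rightarrow> nat \<Rightarrow> nat \<Rightarrow> (nat \<Rightarrow> nat list) set" where
  "configs n m k = PiE {1..m} (\<lambda>_. tuples n k)"

definition stopping_set :: "nat \<Rightarrow> nat \<Rightarrow> (nat \<Rightarrow> nat list) \<Rightarrow> nat set \<Rightarrow> bool" where
  "stopping_set d m G V = (\<forall>a\<in>{1..m}. card (set (G a) \<inter> V) \<notin> {1..d-1})"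

definition prob_cfg :: "nat \<Rightarrow> nat \<Rightarrow> nat \<Rightarrow> ((nat \<Rightarrow> nat list) \<Rightarrow> bool) \<Rightarrow> real" where
  "prob_cfg n m k P = real (card {G \<in> configs n m k. P G}) / real (card (configs n m k))"

end

theory Submission
  imports Defs
begin

lemma tuples_finite: "finite (tuples n k)"
proof -
  have "tuples n k \<subseteq> {xs. set xs \<subseteq> {1..n} \<and> length xs \<le> k}" by (auto simp: tuples_def)
  thus ?thesis using finite_lists_length_le[of "{1..n}" k] finite_subset by blast
qed

lemma tuples_card: "k \<le> n \<Longrightarrow> card (tuples n k) > 0"
proof -
  assume "k \<le> n"
  have "card (tuples n k) = \<Prod>{n - k + 1 .. n}"
    unfolding tuples_def using card_lists_distinct_length_eq[of "{1..n}" k] \<open>k\<le>n\<close> by (simp add: conj_commute)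
  moreover have "\<Prod>{n - k + 1 .. n} > (0::nat)" by (auto intro: prod_pos)
  ultimately show ?thesis by simp
qed

lemma tuples_set: "t \<in> tuples n k \<Longrightarrow> set t \<subseteq> {1..n} \<and> card (set t) = k"
  by (auto simp: tuples_def distinct_card)

lemma configs_finite: "finite (configs n m k)"
  unfolding configs_def by (rule finite_PiE) (auto simp: tuples_finite)

lemma configs_card: "card (configs n m k) = card (tuples n k) ^ m"
  unfolding configs_def by (simp add: card_PiE)

lemma indep1:
  fixes g :: "nat list \<Rightarrow> real" and F :: "(nat \<Rightarrow> nat list) \<Rightarrow> real"
  assumes b: "b \<in> {1..m}"
    and F: "\<And>G t. G \<in> configs n m k \<Longrightarrow> t \<in> tuples n k \<Longrightarrow> F (G(b := t)) = F G"
  shows "(\<Sum>G\<in>configs n m k. g (G b) * F G) * card (tuples n k)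
       = (\<Sum>t\<in>tuples n k. g t) * (\<Sum>G\<in>configs n m k. F G)"
proof -
  let ?C = "configs n m k" and ?T = "tuples n k"
  have upd: "G(b := t) \<in> ?C" if "G \<in> ?C" "t \<in> ?T" for G t
    using that b unfolding configs_def by (auto simp: PiE_def extensional_def)
  have Gb: "G b \<in> ?T" if "G \<in> ?C" for G using that b unfolding configs_def by auto
  have "(\<Sum>(G,t)\<in>?C \<times> ?T. g t * F (G(b:=t))) = (\<Sum>(G,t)\<in>?C \<times> ?T. g (G b) * F G)"
  proof (rule sum.reindex_bij_witness[of _ "\<lambda>(G,t). (G(b:=t), G b)" "\<lambda>(G,t). (G(b:=t), G b)"])
    fix a assume "a \<in> ?C \<times> ?T" then show "(case case a of (G, t) \<Rightarrow> (G(b := t), G b) of (G, t) \<Rightarrow> (G(b := t), G b)) = a"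
      by (cases a) auto
  next
    fix a assume "a \<in> ?C \<times> ?T" then show "(case a of (G, t) \<Rightarrow> (G(b := t), G b)) \<in> ?C \<times> ?T"
      by (cases a) (auto simp: upd Gb)
  next
    fix a assume "a \<in> ?C \<times> ?T" then show "(case case a of (G, t) \<Rightarrow> (G(b := t), G b) of (G, t) \<Rightarrow> (G(b := t), G b)) = a"
      by (cases a) auto
  next
    fix a assume "a \<in> ?C \<times> ?T" then show "(case a of (G, t) \<Rightarrow> (G(b := t), G b)) \<in> ?C \<times> ?T"
      by (cases a) (auto simp: upd Gb)
  next
    fix a assume "a \<in> ?C \<times> ?T" then show "(case case a of (G, t) \<Rightarrow> (G(b := t), G b) of (G, t) \<Rightarrow> g (G b) * F G) = (case a of (G, t) \<Rightarrow> g t * F (G(b := t)))"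
      by (cases a) auto
  qed
  moreover have "(\<Sum>(G,t)\<in>?C \<times> ?T. g t * F (G(b:=t))) = (\<Sum>t\<in>?T. g t) * (\<Sum>G\<in>?C. F G)"
    by (simp add: sum.cartesian_product[symmetric] F sum_distrib_left sum_distrib_right mult.commute)
  moreover have "(\<Sum>(G,t)\<in>?C \<times> ?T. g (G b) * F G) = (\<Sum>G\<in>?C. g (G b) * F G) * card ?T"
    by (simp add: sum.cartesian_product[symmetric] sum_distrib_left sum_distrib_right mult.commute)
  ultimately show ?thesis by simp
qed


definition sw :: "nat \<Rightarrow> nat \<Rightarrow> nat \<Rightarrow> nat" where
  "sw a b x = (if x = a then b else if x = b then a else x)"

lemma sw_sw[simp]: "sw a b (sw a b x) = x" by (auto simp: sw_def)

lemma mem_map_sw: "v \<in> set (map (sw a b) t) \<longleftrightarrow> sw a b v \<in> set t"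
  by (auto simp: image_iff) (metis sw_sw)

lemma sw_simps[simp]: "sw a b a = b" "sw a b b = a" "x \<noteq> a \<Longrightarrow> x \<noteq> b \<Longrightarrow> sw a b x = x"
  by (auto simp: sw_def)

lemma map_sw_tuples: "a \<in> {1..n} \<Longrightarrow> b \<in> {1..n} \<Longrightarrow> t \<in> tuples n k \<Longrightarrow> map (sw a b) t \<in> tuples n k"
  unfolding tuples_def
  by (auto simp: distinct_map sw_def inj_on_def split: if_splits)

lemma card_sym:
  assumes "a \<in> {1..n}" "b \<in> {1..n}"
  shows "card {t\<in>tuples n k. P (map (sw a b) t)} = card {t\<in>tuples n k. P t}"
proof (rule bij_betw_same_card[of "map (sw a b)"])
  show "bij_betw (map (sw a b)) {t \<in> tuples n k. P (map (sw a b) t)} {t \<in> tuples n k. P t}"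
  proof (rule bij_betw_byWitness[of _ "map (sw a b)"])
    show "\<forall>t\<in>{t \<in> tuples n k. P (map (sw a b) t)}. map (sw a b) (map (sw a b) t) = t"
      by (simp add: map_idI)
    show "\<forall>t\<in>{t \<in> tuples n k. P t}. map (sw a b) (map (sw a b) t) = t"
      by (simp add: map_idI)
    show "map (sw a b) ` {t \<in> tuples n k. P (map (sw a b) t)} \<subseteq> {t \<in> tuples n k. P t}"
      using assms map_sw_tuples by auto
    show "map (sw a b) ` {t \<in> tuples n k. P t} \<subseteq> {t \<in> tuples n k. P (map (sw a b) t)}"
      using assms map_sw_tuples by (auto simp: map_idI)
  qed
qed

lemma card_ind: "finite B \<Longrightarrow> card {t\<in>B. P t} = (\<Sum>t\<in>B. if P t then 1 else (0::nat))"
  by (simp add: sum.If_cases Int_def)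

lemma count_swap: "finite A \<Longrightarrow> finite B \<Longrightarrow> (\<Sum>y\<in>A. card {t\<in>B. R y t}) = (\<Sum>t\<in>B. card {y\<in>A. R y t})"
proof -
  assume fA: "finite A" and fB: "finite B"
  have "(\<Sum>y\<in>A. card {t\<in>B. R y t}) = (\<Sum>y\<in>A. \<Sum>t\<in>B. if R y t then 1 else (0::nat))"
    using fB by (simp add: card_ind)
  also have "\<dots> = (\<Sum>t\<in>B. \<Sum>y\<in>A. if R y t then 1 else (0::nat))" by (rule sum.swap)
  also have "\<dots> = (\<Sum>t\<in>B. card {y\<in>A. R y t})"
    using fA by (simp add: card_ind)
  finally show ?thesis .
qed

lemma single_count:
  assumes y: "y \<in> {1..n}"
  shows "card {t\<in>tuples n k. y \<in> set t} * n = k * card (tuples n k)"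
proof -
  have eq: "card {t\<in>tuples n k. y' \<in> set t} = card {t\<in>tuples n k. y \<in> set t}" if y': "y' \<in> {1..n}" for y'
  proof -
    have "card {t\<in>tuples n k. y' \<in> set t} = card {t\<in>tuples n k. y' \<in> set (map (sw y y') t)}"
      using card_sym[OF y y', where P="\<lambda>t. y' \<in> set t"] by simp
    also have "{t\<in>tuples n k. y' \<in> set (map (sw y y') t)} = {t\<in>tuples n k. y \<in> set t}"
      by (simp only: mem_map_sw sw_simps)
    finally show ?thesis .
  qed
  have "(\<Sum>y'\<in>{1..n}. card {t\<in>tuples n k. y' \<in> set t}) = (\<Sum>t\<in>tuples n k. card {y'\<in>{1..n}. y' \<in> set t})"
    by (rule count_swap) (auto simp: tuples_finite)
  also have "\<dots> = (\<Sum>t\<in>tuples n k. k)"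
  proof (rule sum.cong)
    fix t assume "t \<in> tuples n k"
    then have "set t \<subseteq> {1..n}" "card (set t) = k" using tuples_set by auto
    then have "{y'\<in>{1..n}. y' \<in> set t} = set t" "card (set t) = k" by auto
    then show "card {y'\<in>{1..n}. y' \<in> set t} = k" by simp
  qed simp
  finally have "(\<Sum>y'\<in>{1..n}. card {t\<in>tuples n k. y' \<in> set t}) = k * card (tuples n k)" by simp
  moreover have "(\<Sum>y'\<in>{1..n}. card {t\<in>tuples n k. y' \<in> set t}) = n * card {t\<in>tuples n k. y \<in> set t}"
    using eq by simp
  ultimately show ?thesis by (simp add: mult.commute)
qed

lemma pair_count:
  assumes y: "y \<in> {1..n}" and z: "z \<in> {1..n}" and yz: "y \<noteq> z"
  shows "card {t\<in>tuples n k. y \<in> set t \<and> z \<in> set t} * (n - 1) = (k - 1) * card {t\<in>tuples n k. y \<in> set t}"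
proof -
  have eq: "card {t\<in>tuples n k. y \<in> set t \<and> z' \<in> set t} = card {t\<in>tuples n k. y \<in> set t \<and> z \<in> set t}"
    if z': "z' \<in> {1..n} - {y}" for z'
  proof -
    have "card {t\<in>tuples n k. y \<in> set t \<and> z' \<in> set t} = card {t\<in>tuples n k. y \<in> set (map (sw z z') t) \<and> z' \<in> set (map (sw z z') t)}"
      using card_sym[OF z, of z', where P="\<lambda>t. y \<in> set t \<and> z' \<in> set t"] z' by simp
    also have "{t\<in>tuples n k. y \<in> set (map (sw z z') t) \<and> z' \<in> set (map (sw z z') t)} = {t\<in>tuples n k. y \<in> set t \<and> z \<in> set t}"
      using z' yz by (simp only: mem_map_sw) (simp add: sw_def)
    finally show ?thesis .
  qed
  have "(\<Sum>z'\<in>{1..n}-{y}. card {t\<in>{t\<in>tuples n k. y \<in> set t}. z' \<in> set t})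
      = (\<Sum>t\<in>{t\<in>tuples n k. y \<in> set t}. card {z'\<in>{1..n}-{y}. z' \<in> set t})"
    by (rule count_swap) (auto simp: tuples_finite)
  also have "\<dots> = (\<Sum>t\<in>{t\<in>tuples n k. y \<in> set t}. k - 1)"
  proof (rule sum.cong)
    fix t assume "t \<in> {t\<in>tuples n k. y \<in> set t}"
    then have "set t \<subseteq> {1..n}" "card (set t) = k" "y \<in> set t" using tuples_set by auto
    then have "{z'\<in>{1..n}-{y}. z' \<in> set t} = set t - {y}" "card (set t) = k" "y \<in> set t" by auto
    then show "card {z'\<in>{1..n}-{y}. z' \<in> set t} = k - 1" by simp
  qed simp
  finally have A: "(\<Sum>z'\<in>{1..n}-{y}. card {t\<in>{t\<in>tuples n k. y \<in> set t}. z' \<in> set t}) = (k - 1) * card {t\<in>tuples n k. y \<in> set t}" by simp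
  have "(\<Sum>z'\<in>{1..n}-{y}. card {t\<in>{t\<in>tuples n k. y \<in> set t}. z' \<in> set t})
     = (\<Sum>z'\<in>{1..n}-{y}. card {t\<in>tuples n k. y \<in> set t \<and> z \<in> set t})"
    by (rule sum.cong) (auto simp: eq[symmetric] conj_commute intro!: arg_cong[where f=card])
  also have "\<dots> = (n - 1) * card {t\<in>tuples n k. y \<in> set t \<and> z \<in> set t}" using y by simp
  finally show ?thesis using A by (simp add: mult.commute)
qed

lemma pair_prob:
  assumes y: "y \<in> {1..n}" and z: "z \<in> {1..n}" and yz: "y \<noteq> z"
  shows "real (card {t\<in>tuples n k. y \<in> set t \<and> z \<in> set t}) * (real n * (real n - 1))
       = real k * (real k - 1) * real (card (tuples n k))"
proof -
  define P2 where "P2 = card {t\<in>tuples n k. y \<in> set t \<and> z \<in> set t}"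
  define P1 where "P1 = card {t\<in>tuples n k. y \<in> set t}"
  define T where "T = card (tuples n k)"
  have n1: "n \<ge> 1" using y by auto
  have "real (P2 * (n - 1)) = real ((k - 1) * P1)"
    using pair_count[OF y z yz, of k] unfolding P1_def P2_def by simp
  then have a: "real P2 * (real n - 1) = real (k - 1) * real P1"
    using n1 by (simp add: of_nat_diff)
  have b: "real P1 * real n = real k * real T"
    using arg_cong[OF single_count[OF y, of k], of real] unfolding P1_def T_def by simp
  show ?thesis
  proof (cases "k = 0")
    case True
    then have "{t\<in>tuples n k. y \<in> set t \<and> z \<in> set t} = {}" by (auto simp: tuples_def)
    then have "real (card {t\<in>tuples n k. y \<in> set t \<and> z \<in> set t}) = 0" by (simp only: card.empty of_nat_0)
    then show ?thesis using True by simp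
  next
    case False
    then have rk: "real (k - 1) = real k - 1" by (simp add: of_nat_diff)
    have "real P2 * (real n * (real n - 1)) = real n * (real P2 * (real n - 1))" by simp
    also have "\<dots> = (real k - 1) * (real P1 * real n)" using a rk by simp
    also have "\<dots> = real k * (real k - 1) * real T" using b by simp
    finally show ?thesis unfolding P2_def T_def .
  qed
qed


fun valid :: "(nat \<Rightarrow> nat list) \<Rightarrow> nat \<Rightarrow> (nat \<times> nat) list \<Rightarrow> bool" where
  "valid G y [] = True"
| "valid G y ((b,z)#st) = (y \<noteq> z \<and> y \<in> set (G b) \<and> z \<in> set (G b) \<and> valid G z st)"

fun endp :: "nat \<Rightarrow> (nat \<times> nat) list \<Rightarrow> nat" where
  "endp y [] = y"
| "endp y ((b,z)#st) = endp z st"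

definition ind :: "nat \<Rightarrow> nat \<Rightarrow> nat list \<Rightarrow> real" where
  "ind y z t = (if y \<noteq> z \<and> y \<in> set t \<and> z \<in> set t then 1 else 0)"

definition wt :: "nat \<Rightarrow> nat \<Rightarrow> nat \<Rightarrow> nat \<Rightarrow> real" where
  "wt n k y z = (if y \<noteq> z \<and> y \<in> {1..n} \<and> z \<in> {1..n} then real k * (real k - 1) / (real n * (real n - 1)) else 0)"

fun Om :: "nat \<Rightarrow> nat \<Rightarrow> nat set \<Rightarrow> (nat \<Rightarrow> nat list) \<Rightarrow> nat \<Rightarrow> (nat \<times> nat) list \<Rightarrow> real" where
  "Om n k J G y [] = 1"
| "Om n k J G y ((b,z)#st) = (if b \<in> J then ind y z (G b) else wt n k y z) * Om n k J G z st"

definition dep :: "nat set \<Rightarrow> ((nat \<Rightarrow> nat list) \<Rightarrow> real) \<Rightarrow> bool" where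
  "dep J F = (\<forall>G G'. (\<forall>j\<in>J. G j = G' j) \<longrightarrow> F G = F G')"

lemma ind_nonneg: "ind y z t \<ge> 0" by (simp add: ind_def)
lemma ind_le1: "ind y z t \<le> 1" by (simp add: ind_def)

lemma nn1: "real n * (real n - 1) \<ge> 0" by (cases n) auto

lemma wt_nonneg: "k \<ge> 1 \<Longrightarrow> wt n k y z \<ge> 0"
  unfolding wt_def using nn1[of n] nn1[of k] by (auto intro!: divide_nonneg_nonneg)

lemma Om_nonneg: "k \<ge> 1 \<Longrightarrow> Om n k J G y st \<ge> 0"
  by (induction n k J G y st rule: Om.induct) (auto intro!: mult_nonneg_nonneg simp: ind_nonneg wt_nonneg)

lemma Om_cong_J: "J \<inter> fst ` set st = J' \<inter> fst ` set st \<Longrightarrow> Om n k J G y st = Om n k J' G y st"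
proof (induction st arbitrary: y)
  case Nil then show ?case by simp
next
  case (Cons s st)
  obtain b z where s: "s = (b,z)" by (cases s)
  have e1: "J \<inter> fst ` set st = (J \<inter> fst ` set (s#st)) \<inter> fst ` set st" by auto
  have e2: "J' \<inter> fst ` set st = (J' \<inter> fst ` set (s#st)) \<inter> fst ` set st" by auto
  have h1: "J \<inter> fst ` set st = J' \<inter> fst ` set st" using Cons.prems e1 e2 by simp
  have "b \<in> fst ` set (s#st)" using s by simp
  then have h2: "b \<in> J \<longleftrightarrow> b \<in> J'" using Cons.prems by blast
  show ?case using Cons.IH[OF h1] h2 s by simp
qed

lemma Om_dep: "dep J (\<lambda>G. Om n k J G y st)"
  unfolding dep_def
proof (intro allI impI)
  fix G G' :: "nat \<Rightarrow> nat list" assume h: "\<forall>j\<in>J. G j = G' j"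
  show "Om n k J G y st = Om n k J G' y st"
    by (induction st arbitrary: y) (use h in auto)
qed

lemma dep_mult: "dep J F \<Longrightarrow> dep J F' \<Longrightarrow> dep J (\<lambda>G. F G * F' G)"
  unfolding dep_def by metis

lemma dep_mono: "dep J F \<Longrightarrow> J \<subseteq> J' \<Longrightarrow> dep J' F"
  unfolding dep_def by (meson subsetD)

lemma dep_coord: "b \<in> J \<Longrightarrow> dep J (\<lambda>G. g (G b))"
  unfolding dep_def by auto

lemma valid_cong: "(\<forall>j\<in>fst ` set st. G j = G' j) \<Longrightarrow> valid G y st = valid G' y st"
proof (induction st arbitrary: y)
  case Nil then show ?case by simp
next
  case (Cons s st)
  obtain b z where s: "s = (b,z)" by (cases s)
  then show ?case using Cons by auto
qed

lemma valid_dep: "dep (fst ` set st) (\<lambda>G. if valid G y st then 1 else 0)"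
  unfolding dep_def
proof (intro allI impI)
  fix G G' :: "nat \<Rightarrow> nat list" assume h: "\<forall>j\<in>fst ` set st. G j = G' j"
  then show "(if valid G y st then 1 else 0 :: real) = (if valid G' y st then 1 else 0)"
    using valid_cong by metis
qed

lemma ind_sum:
  "(\<Sum>t\<in>tuples n k. ind y z t) = wt n k y z * real (card (tuples n k))"
proof (cases "y \<noteq> z \<and> y \<in> {1..n} \<and> z \<in> {1..n}")
  case True
  then have y: "y \<in> {1..n}" and z: "z \<in> {1..n}" and yz: "y \<noteq> z" by auto
  then have nn: "n \<ge> 2" by auto
  then have n2: "real n * (real n - 1) > 0" by (simp add: mult_pos_pos)
  have "(\<Sum>t\<in>tuples n k. ind y z t) = real (card {t\<in>tuples n k. y \<in> set t \<and> z \<in> set t})"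
    using yz by (simp add: ind_def sum.If_cases tuples_finite Int_def)
  also have "\<dots> = real (card {t\<in>tuples n k. y \<in> set t \<and> z \<in> set t}) * (real n * (real n - 1)) / (real n * (real n - 1))"
    by (rule nonzero_mult_div_cancel_right[symmetric]) (use nn in auto)
  also have "\<dots> = real k * (real k - 1) * real (card (tuples n k)) / (real n * (real n - 1))"
    by (simp only: pair_prob[OF y z yz, of k])
  finally show ?thesis using True by (simp add: wt_def)
next
  case False
  have "ind y z t = 0" if "t \<in> tuples n k" for t
    using False tuples_set[OF that] by (auto simp: ind_def)
  then have "(\<Sum>t\<in>tuples n k. ind y z t) = 0" by simp
  moreover have "wt n k y z = 0" unfolding wt_def using False by (rule if_not_P)
  ultimately show ?thesis by simp
qed

lemma configs_empty: "m \<ge> 1 \<Longrightarrow> tuples n k = {} \<Longrightarrow> configs n m k = {}"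
  unfolding configs_def by (auto simp: PiE_eq_empty_iff)

lemma configs_mem: "G \<in> configs n m k \<Longrightarrow> b \<in> {1..m} \<Longrightarrow> G b \<in> tuples n k"
  unfolding configs_def by auto

lemma LOm:
  assumes "distinct (map fst st)" "fst ` set st \<subseteq> {1..m}" "dep J F"
  shows "(\<Sum>G\<in>configs n m k. F G * (if valid G y st then 1 else 0))
       = (\<Sum>G\<in>configs n m k. F G * Om n k J G y st)"
  using assms
proof (induction st arbitrary: y J F)
  case Nil
  then show ?case by simp
next
  case (Cons s st)
  obtain b z where s: "s = (b,z)" by (cases s)
  have bn: "b \<notin> fst ` set st" and dst: "distinct (map fst st)" using Cons.prems(1) s by auto
  have bm: "b \<in> {1..m}" and stm: "fst ` set st \<subseteq> {1..m}" using Cons.prems(2) s by auto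
  have vsplit: "(if valid G y ((b,z)#st) then 1 else 0 :: real) = ind y z (G b) * (if valid G z st then 1 else 0)" for G
    by (simp add: ind_def)
  let ?F' = "\<lambda>G. F G * ind y z (G b)"
  show ?case
  proof (cases "b \<in> J")
    case True
    have d: "dep J ?F'" by (rule dep_mult[OF Cons.prems(3) dep_coord[OF True]])
    have "(\<Sum>G\<in>configs n m k. F G * (if valid G y (s#st) then 1 else 0))
        = (\<Sum>G\<in>configs n m k. ?F' G * (if valid G z st then 1 else 0))"
      unfolding s vsplit by (simp add: mult.assoc)
    also have "\<dots> = (\<Sum>G\<in>configs n m k. ?F' G * Om n k J G z st)"
      by (rule Cons.IH[OF dst stm d])
    also have "\<dots> = (\<Sum>G\<in>configs n m k. F G * Om n k J G y (s#st))"
      using True by (simp add: s mult.assoc)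
    finally show ?thesis .
  next
    case False
    have d: "dep (insert b J) ?F'"
      by (rule dep_mult[OF dep_mono[OF Cons.prems(3)] dep_coord]) auto
    have "(\<Sum>G\<in>configs n m k. F G * (if valid G y (s#st) then 1 else 0))
        = (\<Sum>G\<in>configs n m k. ?F' G * (if valid G z st then 1 else 0))"
      unfolding s vsplit by (simp add: mult.assoc)
    also have "\<dots> = (\<Sum>G\<in>configs n m k. ?F' G * Om n k (insert b J) G z st)"
      by (rule Cons.IH[OF dst stm d])
    also have "\<dots> = (\<Sum>G\<in>configs n m k. ind y z (G b) * (F G * Om n k J G z st))"
    proof (rule sum.cong)
      fix G show "?F' G * Om n k (insert b J) G z st = ind y z (G b) * (F G * Om n k J G z st)"
        using Om_cong_J[of "insert b J" st J] bn by auto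
    qed simp
    also have "\<dots> = wt n k y z * (\<Sum>G\<in>configs n m k. F G * Om n k J G z st)"
    proof (cases "tuples n k = {}")
      case True
      then show ?thesis using configs_empty[of m n k] bm by simp
    next
      case ne: False
      then have cT: "real (card (tuples n k)) > 0" using tuples_finite by (simp add: card_gt_0_iff)
      have dd: "dep J (\<lambda>G. F G * Om n k J G z st)" by (rule dep_mult[OF Cons.prems(3) Om_dep])
      have "(\<Sum>G\<in>configs n m k. ind y z (G b) * (F G * Om n k J G z st)) * card (tuples n k)
          = (\<Sum>t\<in>tuples n k. ind y z t) * (\<Sum>G\<in>configs n m k. F G * Om n k J G z st)"
      proof (rule indep1[OF bm])
        fix G t show "F (G(b := t)) * Om n k J (G(b := t)) z st = F G * Om n k J G z st"
          using dd False unfolding dep_def by (metis fun_upd_other)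
      qed
      then show ?thesis using cT by (simp add: ind_sum)
    qed
    also have "\<dots> = (\<Sum>G\<in>configs n m k. F G * Om n k J G y (s#st))"
      using False by (simp add: s sum_distrib_left mult.left_commute)
    finally show ?thesis .
  qed
qed


definition SL :: "(nat \<times> nat) set \<Rightarrow> nat \<Rightarrow> (nat \<times> nat) list set" where
  "SL S L = {st. set st \<subseteq> S \<and> length st = L}"

lemma SL_finite: "finite S \<Longrightarrow> finite (SL S L)"
  unfolding SL_def by (rule finite_lists_length_eq)

lemma SL_0: "SL S 0 = {[]}" by (auto simp: SL_def)

lemma sum_SL_Suc:
  assumes "finite S"
  shows "(\<Sum>st\<in>SL S (Suc L). f st) = (\<Sum>s\<in>S. \<Sum>st\<in>SL S L. f (s#st))"
proof -
  have "SL S (Suc L) = (\<lambda>(xs, n). n#xs) ` (SL S L \<times> S)"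
    unfolding SL_def by (rule lists_length_Suc_eq)
  then have "(\<Sum>st\<in>SL S (Suc L). f st) = sum (f \<circ> (\<lambda>(xs, n). n#xs)) (SL S L \<times> S)"
    by (simp add: sum.reindex inj_split_Cons)
  also have "\<dots> = (\<Sum>p\<in>SL S L \<times> S. f (snd p # fst p))"
    by (simp add: comp_def case_prod_beta)
  also have "\<dots> = (\<Sum>st\<in>SL S L. \<Sum>s\<in>S. f (s#st))"
    by (simp only: sum.cartesian_product) (simp add: case_prod_beta)
  also have "\<dots> = (\<Sum>s\<in>S. \<Sum>st\<in>SL S L. f (s#st))" by (rule sum.swap)
  finally show ?thesis .
qed

lemma walk_sum:
  assumes "finite S" "finite Y" "finite I"
  shows "(\<Sum>q\<in>{(y,st). y\<in>Y \<and> set st \<subseteq> S \<and> length st \<in> I}. f q)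
       = (\<Sum>L\<in>I. \<Sum>y\<in>Y. \<Sum>st\<in>SL S L. f (y,st))"
proof -
  have eq: "{(y,st). y\<in>Y \<and> set st \<subseteq> S \<and> length st \<in> I} = (\<Union>L\<in>I. Y \<times> SL S L)"
    by (auto simp: SL_def)
  have "(\<Sum>q\<in>(\<Union>L\<in>I. Y \<times> SL S L). f q) = (\<Sum>L\<in>I. \<Sum>q\<in>Y \<times> SL S L. f q)"
    by (rule sum.UNION_disjoint) (auto simp: assms SL_finite, auto simp: SL_def)
  also have "\<dots> = (\<Sum>L\<in>I. \<Sum>y\<in>Y. \<Sum>st\<in>SL S L. f (y,st))"
    by (simp add: sum.cartesian_product)
  finally show ?thesis using eq by simp
qed

definition om :: "nat \<Rightarrow> nat \<Rightarrow> nat set \<Rightarrow> (nat \<Rightarrow> nat list) \<Rightarrow> nat \<Rightarrow> nat \<times> nat \<Rightarrow> real" where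
  "om n k J G y s = (if fst s \<in> J then ind y (snd s) (G (fst s)) else wt n k y (snd s))"

lemma Om_Cons: "Om n k J G y (s#st) = om n k J G y s * Om n k J G (snd s) st"
  by (cases s) (simp add: om_def)

lemma om_nonneg: "k \<ge> 1 \<Longrightarrow> om n k J G y s \<ge> 0"
  by (simp add: om_def ind_nonneg wt_nonneg)

lemma A_bound:
  assumes S: "finite S" and k: "k \<ge> 1" and K: "\<And>y. (\<Sum>s\<in>S. om n k J G y s) \<le> K" "K \<ge> 0"
  shows "(\<Sum>st\<in>SL S L. Om n k J G y st) \<le> K ^ L"
proof (induction L arbitrary: y)
  case 0 then show ?case by (simp add: SL_0)
next
  case (Suc L)
  have "(\<Sum>st\<in>SL S (Suc L). Om n k J G y st) = (\<Sum>s\<in>S. om n k J G y s * (\<Sum>st\<in>SL S L. Om n k J G (snd s) st))"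
    by (simp add: sum_SL_Suc[OF S] Om_Cons sum_distrib_left)
  also have "\<dots> \<le> (\<Sum>s\<in>S. om n k J G y s * K ^ L)"
    by (rule sum_mono, rule mult_left_mono[OF Suc.IH om_nonneg[OF k]])
  also have "\<dots> \<le> K * K ^ L" using K(1)[of y] by (simp add: sum_distrib_right[symmetric] mult_right_mono K(2))
  finally show ?case by simp
qed

lemma wt_le: "k \<ge> 1 \<Longrightarrow> wt n k y z \<le> real k * (real k - 1) / (real n * (real n - 1))"
  unfolding wt_def using nn1[of n] nn1[of k] by (auto intro!: divide_nonneg_nonneg)

lemma wt_row: "(\<Sum>z\<in>{1..n}. wt n k y z) \<le> real k * (real k - 1) / real n"
proof (cases "y \<in> {1..n}")
  case True
  then have n1: "n \<ge> 1" by auto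
  have "(\<Sum>z\<in>{1..n}. wt n k y z) = (\<Sum>z\<in>{1..n}-{y}. real k * (real k - 1) / (real n * (real n - 1)))"
    using True by (intro sum.mono_neutral_cong_right) (auto simp: wt_def)
  also have "\<dots> = real (n - 1) * (real k * (real k - 1) / (real n * (real n - 1)))"
    using True by simp
  also have "\<dots> \<le> real k * (real k - 1) / real n"
  proof (cases "n = 1")
    case True then show ?thesis using nn1[of k] by simp
  next
    case False then have "real n - 1 \<noteq> 0" "real (n-1) = real n - 1" using n1 by auto
    then show ?thesis by (simp add: field_simps)
  qed
  finally show ?thesis by simp
next
  case False
  then have "\<not> (y \<noteq> z \<and> y \<in> {1..n} \<and> z \<in> {1..n})" for z by auto
  then have "wt n k y z = 0" for z unfolding wt_def by (rule if_not_P)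
  then show ?thesis
    using nn1[of k] by (simp add: divide_nonneg_nonneg)
qed

lemma ind_row: "t \<in> tuples n k \<Longrightarrow> (\<Sum>z\<in>{1..n}. ind y z t) \<le> real k"
proof -
  assume t: "t \<in> tuples n k"
  have "(\<Sum>z\<in>{1..n}. ind y z t) \<le> (\<Sum>z\<in>{1..n}. if z \<in> set t then 1 else 0)"
    by (rule sum_mono) (simp add: ind_def)
  also have "\<dots> = real (card ({1..n} \<inter> set t))" by (simp add: sum.If_cases)
  also have "\<dots> \<le> real k" using tuples_set[OF t] by (metis card_mono finite_set Int_lower2 of_nat_mono)
  finally show ?thesis .
qed

lemma row_bound:
  assumes G: "G \<in> configs n m k" and J: "J \<subseteq> {1..m}" and k: "k \<ge> 1"
  shows "(\<Sum>s\<in>{1..m}\<times>{1..n}. om n k J G y s) \<le> real (card J) * real k + real m * (real k * (real k - 1) / real n)"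
proof -
  have fJ: "finite J" using J finite_subset by blast
  have "(\<Sum>s\<in>{1..m}\<times>{1..n}. om n k J G y s) = (\<Sum>b\<in>{1..m}. \<Sum>z\<in>{1..n}. om n k J G y (b,z))"
    by (simp add: sum.cartesian_product)
  also have "\<dots> = (\<Sum>b\<in>J. \<Sum>z\<in>{1..n}. om n k J G y (b,z)) + (\<Sum>b\<in>{1..m}-J. \<Sum>z\<in>{1..n}. om n k J G y (b,z))"
    by (subst sum.subset_diff[OF J]) (simp_all add: add.commute)
  also have "(\<Sum>b\<in>J. \<Sum>z\<in>{1..n}. om n k J G y (b,z)) \<le> (\<Sum>b\<in>J. real k)"
  proof (rule sum_mono)
    fix b assume b: "b \<in> J"
    then show "(\<Sum>z\<in>{1..n}. om n k J G y (b,z)) \<le> real k"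
      using ind_row[OF configs_mem[OF G]] J by (auto simp: om_def)
  qed
  also have "(\<Sum>b\<in>{1..m}-J. \<Sum>z\<in>{1..n}. om n k J G y (b,z)) \<le> (\<Sum>b\<in>{1..m}-J. real k * (real k - 1) / real n)"
  proof (rule sum_mono)
    fix b assume "b \<in> {1..m}-J"
    then show "(\<Sum>z\<in>{1..n}. om n k J G y (b,z)) \<le> real k * (real k - 1) / real n"
      using wt_row[of n k y] by (simp add: om_def)
  qed
  also have "\<dots> \<le> (\<Sum>b\<in>{1..m}. real k * (real k - 1) / real n)"
    by (rule sum_mono2) (use nn1[of k] in \<open>auto intro!: divide_nonneg_nonneg\<close>)
  finally show ?thesis by (simp add: mult.commute)
qed


definition Ov :: "nat set \<Rightarrow> (nat \<times> nat) list \<Rightarrow> bool" where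
  "Ov J st = (\<exists>s\<in>set st. fst s \<in> J)"

definition Bs :: "nat \<Rightarrow> nat \<Rightarrow> nat set \<Rightarrow> (nat \<Rightarrow> nat list) \<Rightarrow> (nat \<times> nat) set \<Rightarrow> nat \<Rightarrow> nat \<Rightarrow> real" where
  "Bs n k J G S L y = (\<Sum>st\<in>SL S L. if Ov J st then Om n k J G y st else 0)"

lemma Bs_0: "Bs n k J G S 0 y = 0"
  by (simp add: Bs_def SL_0 Ov_def)

lemma Bs_nonneg: "k \<ge> 1 \<Longrightarrow> Bs n k J G S L y \<ge> 0"
  unfolding Bs_def by (rule sum_nonneg) (simp add: Om_nonneg)

lemma A_nonneg: "k \<ge> 1 \<Longrightarrow> (\<Sum>st\<in>SL S L. Om n k J G y st) \<ge> 0"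
  by (rule sum_nonneg) (simp add: Om_nonneg)

lemma Bs_Suc:
  assumes "finite S"
  shows "Bs n k J G S (Suc L) y = (\<Sum>s\<in>S. om n k J G y s *
     (if fst s \<in> J then (\<Sum>st\<in>SL S L. Om n k J G (snd s) st) else Bs n k J G S L (snd s)))"
proof -
  have "Bs n k J G S (Suc L) y = (\<Sum>s\<in>S. \<Sum>st\<in>SL S L. if Ov J (s#st) then Om n k J G y (s#st) else 0)"
    unfolding Bs_def by (rule sum_SL_Suc[OF assms])
  also have "\<dots> = (\<Sum>s\<in>S. om n k J G y s *
     (if fst s \<in> J then (\<Sum>st\<in>SL S L. Om n k J G (snd s) st) else Bs n k J G S L (snd s)))"
  proof (rule sum.cong)
    fix s assume "s \<in> S"
    show "(\<Sum>st\<in>SL S L. if Ov J (s#st) then Om n k J G y (s#st) else 0) = om n k J G y s *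
     (if fst s \<in> J then (\<Sum>st\<in>SL S L. Om n k J G (snd s) st) else Bs n k J G S L (snd s))"
    proof (cases "fst s \<in> J")
      case True
      then show ?thesis by (simp add: Ov_def Om_Cons sum_distrib_left)
    next
      case False
      then have "Ov J (s#st) = Ov J st" for st by (simp add: Ov_def)
      then show ?thesis using False
        by (simp add: Bs_def Om_Cons sum_distrib_left if_distrib[of "\<lambda>x. om n k J G y s * x"] cong: if_cong)
    qed
  qed simp
  finally show ?thesis .
qed

lemma ind_row2: "t \<in> tuples n k \<Longrightarrow> (\<Sum>z\<in>{1..n}. ind y z t) \<le> (if y \<in> set t then real k else 0)"
  using ind_row[of t n k y] by (auto simp: ind_def)

lemma Bs_point:
  assumes G: "G \<in> configs n m k" and J: "J \<subseteq> {1..m}" and k: "k \<ge> 1" and K0: "K \<ge> 0"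
    and K: "\<And>y. (\<Sum>s\<in>{1..m}\<times>{1..n}. om n k J G y s) \<le> K"
  defines "c \<equiv> real k * (real k - 1) / (real n * (real n - 1))"
  shows "Bs n k J G ({1..m}\<times>{1..n}) (Suc L) y \<le>
     (\<Sum>b\<in>J. if y \<in> set (G b) then 1 else 0) * real k * K ^ L
     + real m * c * (\<Sum>z\<in>{1..n}. Bs n k J G ({1..m}\<times>{1..n}) L z)"
proof -
  let ?S = "{1..m}\<times>{1..n}"
  let ?A = "\<lambda>z. (\<Sum>st\<in>SL ?S L. Om n k J G z st)"
  let ?B = "\<lambda>z. Bs n k J G ?S L z"
  let ?f = "\<lambda>s. om n k J G y s * (if fst s \<in> J then ?A (snd s) else ?B (snd s))"
  have c0: "c \<ge> 0" unfolding c_def using nn1[of k] nn1[of n] by (simp add: divide_nonneg_nonneg)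
  have "Bs n k J G ?S (Suc L) y = (\<Sum>s\<in>?S. ?f s)"
    by (rule Bs_Suc) simp
  also have "\<dots> = (\<Sum>b\<in>{1..m}. \<Sum>z\<in>{1..n}. ?f (b,z))"
    unfolding sum.cartesian_product by (rule sum.cong) auto
  also have "\<dots> = (\<Sum>b\<in>J. \<Sum>z\<in>{1..n}. ?f (b,z)) + (\<Sum>b\<in>{1..m}-J. \<Sum>z\<in>{1..n}. ?f (b,z))"
    by (subst sum.subset_diff[OF J]) (simp_all add: add.commute)
  finally have eq0: "Bs n k J G ?S (Suc L) y = (\<Sum>b\<in>J. \<Sum>z\<in>{1..n}. ?f (b,z)) + (\<Sum>b\<in>{1..m}-J. \<Sum>z\<in>{1..n}. ?f (b,z))" .
  have p1: "(\<Sum>b\<in>J. \<Sum>z\<in>{1..n}. ?f (b,z)) \<le> (\<Sum>b\<in>J. (if y \<in> set (G b) then 1 else 0) * real k * K ^ L)"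
  proof (rule sum_mono)
    fix b assume b: "b \<in> J"
    have "(\<Sum>z\<in>{1..n}. ?f (b,z)) \<le> (\<Sum>z\<in>{1..n}. ind y z (G b) * K ^ L)"
    proof (rule sum_mono)
      fix z
      have "?A z \<le> K ^ L"
        using A_bound[OF finite_cartesian_product[OF finite_atLeastAtMost finite_atLeastAtMost] k K K0, where L=L and y=z] .
      then have "ind y z (G b) * ?A z \<le> ind y z (G b) * K ^ L"
        by (rule mult_left_mono) (rule ind_nonneg)
      then show "?f (b,z) \<le> ind y z (G b) * K ^ L"
        using b by (simp add: om_def)
    qed
    also have "\<dots> = (\<Sum>z\<in>{1..n}. ind y z (G b)) * K ^ L" by (simp add: sum_distrib_right)
    also have "\<dots> \<le> (if y \<in> set (G b) then real k else 0) * K ^ L"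
    proof (rule mult_right_mono)
      have bm: "b \<in> {1..m}" using b J by auto
      show "(\<Sum>z\<in>{1..n}. ind y z (G b)) \<le> (if y \<in> set (G b) then real k else 0)"
        using ind_row2[OF configs_mem[OF G bm]] .
    qed (simp add: K0)
    finally show "(\<Sum>z\<in>{1..n}. ?f (b,z)) \<le> (if y \<in> set (G b) then 1 else 0) * real k * K ^ L"
      by (cases "y \<in> set (G b)") simp_all
  qed
  have "(\<Sum>b\<in>{1..m}-J. \<Sum>z\<in>{1..n}. ?f (b,z)) \<le> (\<Sum>b\<in>{1..m}-J. c * (\<Sum>z\<in>{1..n}. ?B z))"
  proof (rule sum_mono)
    fix b assume b: "b \<in> {1..m}-J"
    have "(\<Sum>z\<in>{1..n}. ?f (b,z)) \<le> (\<Sum>z\<in>{1..n}. c * ?B z)"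
    proof (rule sum_mono)
      fix z
      have "wt n k y z * ?B z \<le> c * ?B z"
        by (rule mult_right_mono) (use wt_le[OF k, of n y z] Bs_nonneg[OF k] in \<open>simp_all add: c_def\<close>)
      then show "?f (b,z) \<le> c * ?B z"
        using b by (simp add: om_def)
    qed
    then show "(\<Sum>z\<in>{1..n}. ?f (b,z)) \<le> c * (\<Sum>z\<in>{1..n}. ?B z)" by (simp add: sum_distrib_left)
  qed
  also have "\<dots> \<le> (\<Sum>b\<in>{1..m}. c * (\<Sum>z\<in>{1..n}. ?B z))"
    by (rule sum_mono2) (use c0 Bs_nonneg[OF k] in \<open>auto intro!: mult_nonneg_nonneg sum_nonneg\<close>)
  finally have p2: "(\<Sum>b\<in>{1..m}-J. \<Sum>z\<in>{1..n}. ?f (b,z)) \<le> real m * (c * (\<Sum>z\<in>{1..n}. ?B z))" by simp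
  have p1': "(\<Sum>b\<in>J. (if y \<in> set (G b) then 1 else 0) * real k * K ^ L) = (\<Sum>b\<in>J. if y \<in> set (G b) then 1 else 0) * real k * K ^ L"
    by (simp add: sum_distrib_right)
  show ?thesis using eq0 p1 p2 p1' by (simp add: mult.assoc)
qed

lemma Bs_sum:
  assumes G: "G \<in> configs n m k" and J: "J \<subseteq> {1..m}" and k: "k \<ge> 1" and K0: "K \<ge> 0"
    and K: "\<And>y. (\<Sum>s\<in>{1..m}\<times>{1..n}. om n k J G y s) \<le> K"
    and Y: "finite Y"
  defines "c \<equiv> real k * (real k - 1) / (real n * (real n - 1))"
  shows "(\<Sum>y\<in>Y. Bs n k J G ({1..m}\<times>{1..n}) (Suc L) y) \<le>
     real (card J) * real k * real k * K ^ L
     + real (card Y) * (real m * c * (\<Sum>z\<in>{1..n}. Bs n k J G ({1..m}\<times>{1..n}) L z))"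
proof -
  let ?B = "(\<Sum>z\<in>{1..n}. Bs n k J G ({1..m}\<times>{1..n}) L z)"
  have fJ: "finite J" using J finite_subset by blast
  have "(\<Sum>y\<in>Y. Bs n k J G ({1..m}\<times>{1..n}) (Suc L) y) \<le>
     (\<Sum>y\<in>Y. (\<Sum>b\<in>J. if y \<in> set (G b) then 1 else 0) * real k * K ^ L + real m * c * ?B)"
    by (rule sum_mono) (use Bs_point[OF G J k K0 K] in \<open>simp add: c_def\<close>)
  also have "\<dots> = (\<Sum>b\<in>J. \<Sum>y\<in>Y. if y \<in> set (G b) then 1 else 0) * real k * K ^ L + real (card Y) * (real m * c * ?B)"
    by (simp add: sum.distrib sum_distrib_right[symmetric] sum.swap[of _ Y J])
  finally have e0: "(\<Sum>y\<in>Y. Bs n k J G ({1..m}\<times>{1..n}) (Suc L) y) \<le> (\<Sum>b\<in>J. \<Sum>y\<in>Y. if y \<in> set (G b) then 1 else 0) * real k * K ^ L + real (card Y) * (real m * c * ?B)" .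
  have "(\<Sum>b\<in>J. \<Sum>y\<in>Y. if y \<in> set (G b) then 1 else 0) \<le> (\<Sum>b\<in>J. real k)"
  proof (rule sum_mono)
    fix b assume b: "b \<in> J"
    have "(\<Sum>y\<in>Y. if y \<in> set (G b) then 1 else 0) = real (card (Y \<inter> set (G b)))"
      using Y by (simp add: sum.If_cases)
    also have "\<dots> \<le> real (card (set (G b)))" by (simp add: card_mono)
    also have "\<dots> = real k" using tuples_set[OF configs_mem[OF G, of b]] b J by auto
    finally show "(\<Sum>y\<in>Y. if y \<in> set (G b) then 1 else 0) \<le> real k" .
  qed
  then have "(\<Sum>b\<in>J. \<Sum>y\<in>Y. if y \<in> set (G b) then 1 else 0) \<le> real (card J) * real k" by simp
  then have "(\<Sum>b\<in>J. \<Sum>y\<in>Y. if y \<in> set (G b) then 1 else 0) * (real k * K ^ L) \<le> real (card J) * real k * (real k * K ^ L)"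
    by (rule mult_right_mono) (use K0 in simp)
  then show ?thesis using e0 by (simp add: mult.assoc)
qed


lemma beta_rec:
  fixes \<beta> :: "nat \<Rightarrow> real"
  assumes b0: "\<beta> 0 = 0" and bnn: "\<And>L. \<beta> L \<ge> 0" and rec: "\<And>L. \<beta> (Suc L) \<le> j2 * K ^ L + 2 * \<beta> L"
    and K: "K \<ge> 0" and j: "j2 \<ge> 0"
  shows "\<beta> L \<le> real L * j2 * (K + 2) ^ L"
proof (induction L)
  case 0 then show ?case using b0 by simp
next
  case (Suc L)
  have kk: "K ^ L \<le> (K + 2) ^ L" using K by (intro power_mono) auto
  have p: "(K + 2) ^ L \<ge> 0" using K by simp
  have "\<beta> (Suc L) \<le> j2 * K ^ L + 2 * (real L * j2 * (K + 2) ^ L)" using rec[of L] Suc.IH by linarith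
  also have "\<dots> \<le> j2 * (K + 2) ^ L + 2 * (real L * j2 * (K + 2) ^ L)"
    using mult_left_mono[OF kk j] by linarith
  also have "\<dots> = (1 + 2 * real L) * (j2 * (K + 2) ^ L)" by (simp add: algebra_simps)
  also have "\<dots> \<le> ((real L + 1) * (K + 2)) * (j2 * (K + 2) ^ L)"
  proof (rule mult_right_mono)
    have "(real L + 1) * 2 \<le> (real L + 1) * (K + 2)" by (rule mult_left_mono) (use K in auto)
    then show "1 + 2 * real L \<le> (real L + 1) * (K + 2)" by (smt (verit))
  qed (use j p in simp)
  also have "\<dots> = real (Suc L) * j2 * (K + 2) ^ Suc L" by (simp add: algebra_simps)
  finally show ?case .
qed

lemma overlap_bound:
  assumes G: "G \<in> configs n m k" and J: "J \<subseteq> {1..m}" and cJ: "card J \<le> L0" and k: "k \<ge> 1"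
    and n2: "n \<ge> 2" and rho1: "real m * (real k * (real k - 1) / real n) \<le> 1"
  shows "(\<Sum>L<L0. \<Sum>y\<in>{1..u}. Bs n k J G ({1..m}\<times>{1..n}) (Suc L) y)
     \<le> real L0 * (real L0 * real k * real k) * (real L0 * real k + 3) ^ L0
       + 2 * real L0 * real L0 * (real L0 * real k * real k) * (real L0 * real k + 3) ^ L0 * real u / real n"
proof -
  define K where "K = real L0 * real k + 1"
  define j2 where "j2 = real L0 * real k * real k"
  define c where "c = real k * (real k - 1) / (real n * (real n - 1))"
  define P where "P = (K + 2) ^ L0"
  let ?S = "{1..m}\<times>{1..n}"
  define \<beta> where "\<beta> L = (\<Sum>z\<in>{1..n}. Bs n k J G ?S L z)" for L
  have K0: "K \<ge> 0" and j0: "j2 \<ge> 0" unfolding K_def j2_def by auto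
  have c0: "c \<ge> 0" unfolding c_def using nn1[of k] nn1[of n] by (simp add: divide_nonneg_nonneg)
  have rnk: "real n > 1" using n2 by simp
  have rho0: "real m * (real k * (real k - 1) / real n) \<ge> 0" using nn1[of k] by (simp add: divide_nonneg_nonneg)
  have mc: "real m * c = real m * (real k * (real k - 1) / real n) / (real n - 1)"
    unfolding c_def by (simp add: field_simps)
  have mc1: "real m * c \<le> 1 / (real n - 1)"
    unfolding mc by (rule divide_right_mono[OF rho1]) (use rnk in simp)
  have mc2: "real m * c \<le> 2 / real n"
  proof -
    have "1 / (real n - 1) \<le> 2 / real n" using rnk n2 by (simp add: field_simps)
    then show ?thesis using mc1 by linarith
  qed
  have nmc: "real n * (real m * c) \<le> 2"
  proof -
    have "real n * (real m * c) \<le> real n * (2 / real n)" using mc2 rnk by (intro mult_left_mono) auto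
    then show ?thesis using rnk by simp
  qed
  have row: "(\<Sum>s\<in>?S. om n k J G y s) \<le> K" for y
  proof -
    have "(\<Sum>s\<in>?S. om n k J G y s) \<le> real (card J) * real k + real m * (real k * (real k - 1) / real n)"
      by (rule row_bound[OF G J k])
    also have "\<dots> \<le> real L0 * real k + 1" using cJ rho1 by (intro add_mono mult_right_mono) auto
    finally show ?thesis unfolding K_def .
  qed
  have bnn: "\<beta> L \<ge> 0" for L unfolding \<beta>_def by (rule sum_nonneg) (simp add: Bs_nonneg[OF k])
  have b0: "\<beta> 0 = 0" unfolding \<beta>_def by (simp add: Bs_0)
  have cJk: "real (card J) * real k * real k * K ^ L \<le> j2 * K ^ L" for L
    unfolding j2_def using cJ K0 by (intro mult_right_mono) (auto intro!: mult_right_mono)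
  have brec: "\<beta> (Suc L) \<le> j2 * K ^ L + 2 * \<beta> L" for L
  proof -
    have "\<beta> (Suc L) \<le> real (card J) * real k * real k * K ^ L + real (card {1..n}) * (real m * c * \<beta> L)"
      unfolding \<beta>_def c_def by (rule Bs_sum[OF G J k K0 row]) simp
    also have "real (card {1..n}) * (real m * c * \<beta> L) = (real n * (real m * c)) * \<beta> L" by simp
    also have "\<dots> \<le> 2 * \<beta> L" using nmc bnn[of L] by (intro mult_right_mono) auto
    finally show ?thesis using cJk[of L] by linarith
  qed
  have bb: "\<beta> L \<le> real L * j2 * (K + 2) ^ L" for L
    by (rule beta_rec[OF b0 bnn brec K0 j0])
  have bL: "\<beta> L \<le> real L0 * j2 * P" if "L < L0" for L
  proof -
    have "real L * j2 * (K + 2) ^ L \<le> real L0 * j2 * (K + 2) ^ L0"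
      using that K0 j0 by (intro mult_mono power_increasing) auto
    then show ?thesis using bb[of L] unfolding P_def by linarith
  qed
  have aL: "(\<Sum>y\<in>{1..u}. Bs n k J G ?S (Suc L) y) \<le> j2 * P + real u * (2 / real n) * (real L0 * j2 * P)"
    if "L < L0" for L
  proof -
    have "(\<Sum>y\<in>{1..u}. Bs n k J G ?S (Suc L) y) \<le> real (card J) * real k * real k * K ^ L + real (card {1..u}) * (real m * c * \<beta> L)"
      unfolding \<beta>_def c_def by (rule Bs_sum[OF G J k K0 row]) simp
    also have "\<dots> \<le> j2 * K ^ L + real u * (real m * c * \<beta> L)" using cJk[of L] by simp
    also have "j2 * K ^ L \<le> j2 * P"
    proof (rule mult_left_mono)
      have "K ^ L \<le> (K + 2) ^ L" using K0 by (intro power_mono) auto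
      also have "\<dots> \<le> (K + 2) ^ L0" using K0 that by (intro power_increasing) auto
      finally show "K ^ L \<le> P" unfolding P_def .
    qed (rule j0)
    also have "real m * c * \<beta> L \<le> (2 / real n) * (real L0 * j2 * P)"
      using mc2 bL[OF that] bnn[of L] c0 by (intro mult_mono) auto
    finally show ?thesis by (simp add: mult_left_mono mult.assoc)
  qed
  have "(\<Sum>L<L0. \<Sum>y\<in>{1..u}. Bs n k J G ?S (Suc L) y) \<le> (\<Sum>L<L0. j2 * P + real u * (2 / real n) * (real L0 * j2 * P))"
    by (rule sum_mono) (use aL in simp)
  also have "\<dots> = real L0 * j2 * P + 2 * real L0 * real L0 * j2 * P * real u / real n"
    by (simp add: algebra_simps)
  finally show ?thesis unfolding j2_def P_def K_def by (simp add: add.assoc)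
qed


definition Pth :: "nat \<Rightarrow> nat \<Rightarrow> nat \<Rightarrow> (nat \<times> (nat \<times> nat) list) set" where
  "Pth u m n = {(y,st). y \<in> {1..u} \<and> st \<noteq> [] \<and> distinct (map fst st) \<and> set st \<subseteq> {1..m}\<times>{1..n}}"

definition NN :: "(nat \<Rightarrow> nat list) \<Rightarrow> (nat \<times> (nat \<times> nat) list) set \<Rightarrow> real" where
  "NN G Q = (\<Sum>p\<in>Q. if valid G (fst p) (snd p) then 1 else 0)"

definition wp :: "nat \<Rightarrow> nat \<Rightarrow> nat \<Rightarrow> (nat \<times> nat) list \<Rightarrow> real" where
  "wp n k y st = Om n k {} (\<lambda>_. []) y st"

lemma Om_empty: "Om n k {} G y st = wp n k y st"
  unfolding wp_def by (induction st arbitrary: y) auto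

lemma wp_nonneg: "k \<ge> 1 \<Longrightarrow> wp n k y st \<ge> 0"
  unfolding wp_def by (rule Om_nonneg)

lemma Pth_length: "p \<in> Pth u m n \<Longrightarrow> length (snd p) \<in> {1..m}"
proof -
  assume "p \<in> Pth u m n"
  then obtain y st where p: "p = (y,st)" and st: "st \<noteq> []" "distinct (map fst st)" "set st \<subseteq> {1..m}\<times>{1..n}"
    unfolding Pth_def by auto
  have "length st = card (set (map fst st))" using distinct_card[OF st(2)] by simp
  also have "\<dots> \<le> card {1..m}" using st(3) by (intro card_mono) auto
  finally have "length st \<le> m" by simp
  moreover have "length st \<ge> 1" using st(1) by (cases st) auto
  ultimately show ?thesis using p by simp
qed

lemma Pth_sub: "Pth u m n \<subseteq> {(y,st). y \<in> {1..u} \<and> set st \<subseteq> {1..m}\<times>{1..n} \<and> length st \<in> {1..m}}"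
  using Pth_length by (fastforce simp: Pth_def)

lemma walks_finite:
  fixes S :: "(nat \<times> nat) set" and Y :: "nat set"
  assumes "finite Y" "finite S" "finite I"
  shows "finite {(y,st). y \<in> Y \<and> set st \<subseteq> S \<and> length st \<in> I}"
proof -
  have "{(y,st). y \<in> Y \<and> set st \<subseteq> S \<and> length st \<in> I} = (\<Union>L\<in>I. Y \<times> SL S L)" by (auto simp: SL_def)
  then show ?thesis using assms by (simp add: SL_finite)
qed

lemma Pth_finite: "finite (Pth u m n)"
  by (rule finite_subset[OF Pth_sub walks_finite]) auto

lemma moment1:
  assumes Q: "Q \<subseteq> Pth u m n"
  shows "(\<Sum>G\<in>configs n m k. NN G Q) = real (card (configs n m k)) * (\<Sum>p\<in>Q. wp n k (fst p) (snd p))"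
proof -
  have fQ: "finite Q" using finite_subset[OF Q Pth_finite] .
  have "(\<Sum>G\<in>configs n m k. NN G Q) = (\<Sum>p\<in>Q. \<Sum>G\<in>configs n m k. if valid G (fst p) (snd p) then 1 else 0)"
    unfolding NN_def by (rule sum.swap)
  also have "\<dots> = (\<Sum>p\<in>Q. real (card (configs n m k)) * wp n k (fst p) (snd p))"
  proof (rule sum.cong)
    fix p assume p: "p \<in> Q"
    then have "p \<in> Pth u m n" using Q by auto
    then have d: "distinct (map fst (snd p))" "fst ` set (snd p) \<subseteq> {1..m}" unfolding Pth_def by (cases p, force)+
    have dep1: "dep {} (\<lambda>G. 1)" by (simp add: dep_def)
    have "(\<Sum>G\<in>configs n m k. (\<lambda>G. 1) G * (if valid G (fst p) (snd p) then 1 else 0))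
        = (\<Sum>G\<in>configs n m k. (\<lambda>G. 1) G * Om n k {} G (fst p) (snd p))"
      by (rule LOm[OF d dep1])
    then show "(\<Sum>G\<in>configs n m k. if valid G (fst p) (snd p) then 1 else 0) = real (card (configs n m k)) * wp n k (fst p) (snd p)"
      by (simp add: Om_empty)
  qed simp
  finally show ?thesis by (simp add: sum_distrib_left)
qed

lemma row0: "(\<Sum>s\<in>{1..m}\<times>{1..n}. om n k {} G y s) \<le> real m * (real k * (real k - 1) / real n)"
proof -
  have "(\<Sum>s\<in>{1..m}\<times>{1..n}. om n k {} G y s) = (\<Sum>b\<in>{1..m}. \<Sum>z\<in>{1..n}. wt n k y z)"
    unfolding sum.cartesian_product by (rule sum.cong) (auto simp: om_def)
  also have "\<dots> \<le> (\<Sum>b\<in>{1..m}. real k * (real k - 1) / real n)"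
    by (rule sum_mono) (rule wt_row)
  finally show ?thesis by simp
qed

lemma wsum_bound:
  assumes Q: "Q \<subseteq> Pth u m n" and I: "\<And>p. p \<in> Q \<Longrightarrow> length (snd p) \<in> I" "finite I"
    and k: "k \<ge> 1" and rho: "real m * (real k * (real k - 1) / real n) \<le> \<rho>" "\<rho> \<ge> 0"
  shows "(\<Sum>p\<in>Q. wp n k (fst p) (snd p)) \<le> (\<Sum>L\<in>I. real u * \<rho> ^ L)"
proof -
  let ?W = "{(y,st). y \<in> {1..u} \<and> set st \<subseteq> {1..m}\<times>{1..n} \<and> length st \<in> I}"
  have QW: "Q \<subseteq> ?W" using Q I(1) unfolding Pth_def by auto
  have "(\<Sum>p\<in>Q. wp n k (fst p) (snd p)) \<le> (\<Sum>p\<in>?W. wp n k (fst p) (snd p))"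
    by (rule sum_mono2[OF walks_finite QW]) (auto simp: I(2) wp_nonneg[OF k])
  also have "\<dots> = (\<Sum>L\<in>I. \<Sum>y\<in>{1..u}. \<Sum>st\<in>SL ({1..m}\<times>{1..n}) L. wp n k y st)"
    by (subst walk_sum) (auto simp: I(2))
  also have "\<dots> \<le> (\<Sum>L\<in>I. \<Sum>y\<in>{1..u}. \<rho> ^ L)"
  proof (intro sum_mono)
    fix L y
    have "(\<Sum>st\<in>SL ({1..m}\<times>{1..n}) L. Om n k {} (\<lambda>_. []) y st) \<le> \<rho> ^ L"
    proof (rule A_bound[OF _ k _ rho(2)])
      fix y show "(\<Sum>s\<in>{1..m}\<times>{1..n}. om n k {} (\<lambda>_. []) y s) \<le> \<rho>"
        using row0[where m=m and n=n and k=k and G="\<lambda>_. []" and y=y] rho(1) by linarith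
    qed simp
    then show "(\<Sum>st\<in>SL ({1..m}\<times>{1..n}) L. wp n k y st) \<le> \<rho> ^ L" by (simp add: wp_def)
  qed
  finally show ?thesis by simp
qed


lemma inner_bound:
  assumes G: "G \<in> configs n m k" and J: "J \<subseteq> {1..m}" and cJ: "card J \<le> L0" and k: "k \<ge> 1"
    and n2: "n \<ge> 2" and rho1: "real m * (real k * (real k - 1) / real n) \<le> 1"
  shows "(\<Sum>q\<in>{p\<in>Pth u m n. length (snd p) \<le> L0}. Om n k J G (fst q) (snd q))
     \<le> (\<Sum>q\<in>{p\<in>Pth u m n. length (snd p) \<le> L0}. wp n k (fst q) (snd q))
       + (real L0 * (real L0 * real k * real k) * (real L0 * real k + 3) ^ L0
       + 2 * real L0 * real L0 * (real L0 * real k * real k) * (real L0 * real k + 3) ^ L0 * real u / real n)"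
proof -
  let ?Q = "{p\<in>Pth u m n. length (snd p) \<le> L0}"
  let ?S = "{1..m}\<times>{1..n}"
  let ?W = "{(y,st). y \<in> {1..u} \<and> set st \<subseteq> ?S \<and> length st \<in> {1..L0}}"
  let ?g = "\<lambda>q. if Ov J (snd q) then Om n k J G (fst q) (snd q) else 0"
  have fQ: "finite ?Q" using Pth_finite by simp
  have pt: "Om n k J G (fst q) (snd q) \<le> wp n k (fst q) (snd q) + ?g q" for q
  proof (cases "Ov J (snd q)")
    case True then show ?thesis using wp_nonneg[OF k] by simp
  next
    case False
    then have "J \<inter> fst ` set (snd q) = {} \<inter> fst ` set (snd q)" by (auto simp: Ov_def)
    then have "Om n k J G (fst q) (snd q) = Om n k {} G (fst q) (snd q)" by (rule Om_cong_J)
    then show ?thesis using False by (simp add: Om_empty)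
  qed
  have QW: "?Q \<subseteq> ?W"
  proof
    fix q assume "q \<in> ?Q"
    then show "q \<in> ?W" using Pth_length[of q u m n] unfolding Pth_def by auto
  qed
  have gnn: "?g q \<ge> 0" for q using Om_nonneg[OF k] by simp
  have "(\<Sum>q\<in>?Q. ?g q) \<le> (\<Sum>q\<in>?W. ?g q)"
    by (rule sum_mono2[OF walks_finite QW]) (use gnn in auto)
  also have "\<dots> = (\<Sum>L\<in>{1..L0}. \<Sum>y\<in>{1..u}. \<Sum>st\<in>SL ?S L. ?g (y,st))"
    by (rule walk_sum) auto
  also have "\<dots> = (\<Sum>L\<in>{1..L0}. \<Sum>y\<in>{1..u}. Bs n k J G ?S L y)"
    by (simp only: Bs_def fst_conv snd_conv)
  also have "\<dots> = (\<Sum>L<L0. \<Sum>y\<in>{1..u}. Bs n k J G ?S (Suc L) y)"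
    by (simp add: sum.atLeast1_atMost_eq)
  also have "\<dots> \<le> real L0 * (real L0 * real k * real k) * (real L0 * real k + 3) ^ L0
       + 2 * real L0 * real L0 * (real L0 * real k * real k) * (real L0 * real k + 3) ^ L0 * real u / real n"
    by (rule overlap_bound[OF G J cJ k n2 rho1])
  finally have g: "(\<Sum>q\<in>?Q. ?g q) \<le> \<dots>" .
  have "(\<Sum>q\<in>?Q. Om n k J G (fst q) (snd q)) \<le> (\<Sum>q\<in>?Q. wp n k (fst q) (snd q) + ?g q)"
    by (rule sum_mono) (rule pt)
  also have "\<dots> = (\<Sum>q\<in>?Q. wp n k (fst q) (snd q)) + (\<Sum>q\<in>?Q. ?g q)" by (rule sum.distrib)
  finally show ?thesis using g by linarith
qed

lemma moment2:
  fixes u L0 m n k :: nat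
  assumes k: "k \<ge> 1" and n2: "n \<ge> 2" and rho1: "real m * (real k * (real k - 1) / real n) \<le> 1"
  defines "Q \<equiv> {p\<in>Pth u m n. length (snd p) \<le> L0}"
  defines "W \<equiv> (\<Sum>q\<in>Q. wp n k (fst q) (snd q))"
  defines "Cst \<equiv> real L0 * (real L0 * real k * real k) * (real L0 * real k + 3) ^ L0
       + 2 * real L0 * real L0 * (real L0 * real k * real k) * (real L0 * real k + 3) ^ L0 * real u / real n"
  shows "(\<Sum>G\<in>configs n m k. (NN G Q)\<^sup>2) \<le> real (card (configs n m k)) * W * (W + Cst)"
proof -
  let ?C = "configs n m k"
  let ?v = "\<lambda>G p. if valid G (fst p) (snd p) then 1 else (0::real)"
  have QP: "Q \<subseteq> Pth u m n" unfolding Q_def by auto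
  have fQ: "finite Q" using finite_subset[OF QP Pth_finite] .
  have "(\<Sum>G\<in>?C. (NN G Q)\<^sup>2) = (\<Sum>G\<in>?C. \<Sum>p\<in>Q. \<Sum>q\<in>Q. ?v G p * ?v G q)"
    unfolding NN_def power2_eq_square by (simp add: sum_product)
  also have "\<dots> = (\<Sum>p\<in>Q. \<Sum>G\<in>?C. \<Sum>q\<in>Q. ?v G p * ?v G q)" by (rule sum.swap)
  also have "\<dots> \<le> (\<Sum>p\<in>Q. real (card ?C) * wp n k (fst p) (snd p) * (W + Cst))"
  proof (rule sum_mono)
    fix p assume pQ: "p \<in> Q"
    define J where "J = fst ` set (snd p)"
    have pP: "p \<in> Pth u m n" using pQ QP by auto
    have Jm: "J \<subseteq> {1..m}" and dp: "distinct (map fst (snd p))" and lp: "length (snd p) \<le> L0"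
      using pQ unfolding Q_def Pth_def J_def by (cases p, force)+
    have cJ: "card J \<le> L0" unfolding J_def using lp
      by (metis card_length le_trans length_map set_map)
    have dv: "dep J (\<lambda>G. ?v G p)" unfolding J_def by (rule valid_dep)
    have "(\<Sum>G\<in>?C. \<Sum>q\<in>Q. ?v G p * ?v G q) = (\<Sum>q\<in>Q. \<Sum>G\<in>?C. ?v G p * ?v G q)" by (rule sum.swap)
    also have "\<dots> = (\<Sum>q\<in>Q. \<Sum>G\<in>?C. ?v G p * Om n k J G (fst q) (snd q))"
    proof (rule sum.cong)
      fix q assume "q \<in> Q"
      then have "distinct (map fst (snd q))" "fst ` set (snd q) \<subseteq> {1..m}"
        unfolding Q_def Pth_def by (cases q, force)+
      then show "(\<Sum>G\<in>?C. ?v G p * ?v G q) = (\<Sum>G\<in>?C. ?v G p * Om n k J G (fst q) (snd q))"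
        by (rule LOm[OF _ _ dv])
    qed simp
    also have "\<dots> = (\<Sum>G\<in>?C. ?v G p * (\<Sum>q\<in>Q. Om n k J G (fst q) (snd q)))"
      by (subst sum.swap) (simp add: sum_distrib_left)
    also have "\<dots> \<le> (\<Sum>G\<in>?C. ?v G p * (W + Cst))"
    proof (rule sum_mono)
      fix G assume G: "G \<in> ?C"
      have "(\<Sum>q\<in>Q. Om n k J G (fst q) (snd q)) \<le> W + Cst"
        unfolding W_def Cst_def Q_def by (rule inner_bound[OF G Jm cJ k n2 rho1])
      then show "?v G p * (\<Sum>q\<in>Q. Om n k J G (fst q) (snd q)) \<le> ?v G p * (W + Cst)"
        by (rule mult_left_mono) simp
    qed
    also have "\<dots> = (\<Sum>G\<in>?C. ?v G p) * (W + Cst)" by (simp add: sum_distrib_right)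
    also have "(\<Sum>G\<in>?C. ?v G p) = real (card ?C) * wp n k (fst p) (snd p)"
      using moment1[of "{p}" u m n k] pP by (simp add: NN_def)
    finally show "(\<Sum>G\<in>?C. \<Sum>q\<in>Q. ?v G p * ?v G q) \<le> real (card ?C) * wp n k (fst p) (snd p) * (W + Cst)" .
  qed
  also have "\<dots> = real (card ?C) * W * (W + Cst)"
    unfolding W_def by (simp add: sum_distrib_left sum_distrib_right mult.assoc)
  finally show ?thesis .
qed

lemma cheb:
  fixes f :: "'a \<Rightarrow> real"
  assumes C: "finite C" and s2: "(\<Sum>G\<in>C. (f G)\<^sup>2) \<le> real (card C) * W * (W + c)"
    and s1: "(\<Sum>G\<in>C. f G) = real (card C) * W" and t: "t > 0"
  shows "real (card {G\<in>C. f G \<ge> W + t}) * t\<^sup>2 \<le> real (card C) * W * c"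
proof -
  have "real (card {G\<in>C. f G \<ge> W + t}) * t\<^sup>2 = (\<Sum>G\<in>{G\<in>C. f G \<ge> W + t}. t\<^sup>2)" by simp
  also have "\<dots> \<le> (\<Sum>G\<in>{G\<in>C. f G \<ge> W + t}. (f G - W)\<^sup>2)"
  proof (rule sum_mono)
    fix G assume "G \<in> {G\<in>C. f G \<ge> W + t}"
    then have "t \<le> f G - W" by simp
    then show "t\<^sup>2 \<le> (f G - W)\<^sup>2" using t by (intro power_mono) auto
  qed
  also have "\<dots> \<le> (\<Sum>G\<in>C. (f G - W)\<^sup>2)" by (rule sum_mono2) (auto simp: C)
  also have "\<dots> = (\<Sum>G\<in>C. (f G)\<^sup>2 - (2 * W) * f G + W\<^sup>2)"
    by (rule sum.cong) (auto simp: power2_eq_square algebra_simps)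
  also have "\<dots> = (\<Sum>G\<in>C. (f G)\<^sup>2) - 2 * W * (\<Sum>G\<in>C. f G) + real (card C) * W\<^sup>2"
    by (simp add: sum.distrib sum_subtractf sum_distrib_left[symmetric])
  also have "\<dots> \<le> real (card C) * W * c" using s2 s1 by (simp add: power2_eq_square algebra_simps)
  finally show ?thesis .
qed

lemma markov:
  fixes f :: "'a \<Rightarrow> real"
  assumes C: "finite C" and nn: "\<And>G. G \<in> C \<Longrightarrow> f G \<ge> 0" and t: "t > 0"
  shows "real (card {G\<in>C. f G \<ge> t}) * t \<le> (\<Sum>G\<in>C. f G)"
proof -
  have "real (card {G\<in>C. f G \<ge> t}) * t = (\<Sum>G\<in>{G\<in>C. f G \<ge> t}. t)" by simp
  also have "\<dots> \<le> (\<Sum>G\<in>{G\<in>C. f G \<ge> t}. f G)" by (rule sum_mono) simp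
  also have "\<dots> \<le> (\<Sum>G\<in>C. f G)" by (rule sum_mono2) (auto simp: C nn)
  finally show ?thesis .
qed


lemma valid_append: "valid G y (xs @ ys) = (valid G y xs \<and> valid G (endp y xs) ys)"
  by (induction xs arbitrary: y) auto

lemma endp_append: "endp y (xs @ ys) = endp (endp y xs) ys"
  by (induction xs arbitrary: y) auto

definition RR :: "nat \<Rightarrow> nat \<Rightarrow> nat \<Rightarrow> (nat \<Rightarrow> nat list) \<Rightarrow> nat set" where
  "RR u m n G = {1..u} \<union> (\<lambda>p. endp (fst p) (snd p)) ` {p\<in>Pth u m n. valid G (fst p) (snd p)}"

lemma RR_ext:
  assumes "(y, st) \<in> Pth u m n" "valid G y st" "z = endp y st"
  shows "z \<in> RR u m n G"
  unfolding RR_def by (rule UnI2, rule image_eqI[of _ _ "(y,st)"]) (use assms in auto)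

lemma closure:
  assumes G: "G \<in> configs n m k" and a: "a \<in> {1..m}" and w: "w \<in> RR u m n G"
    and wa: "w \<in> set (G a)" and za: "z \<in> set (G a)"
  shows "z \<in> RR u m n G"
proof (cases "z = w")
  case True then show ?thesis using w by simp
next
  case zw: False
  have zn: "z \<in> {1..n}" using tuples_set[OF configs_mem[OF G a]] za by auto
  show ?thesis
  proof (cases "w \<in> {1..u}")
    case True
    have "(w, [(a,z)]) \<in> Pth u m n" using True a zn unfolding Pth_def by auto
    moreover have "valid G w [(a,z)]" using zw wa za by auto
    ultimately show ?thesis by (intro RR_ext) auto
  next
    case False
    then obtain y st where p: "(y,st) \<in> Pth u m n" "valid G y st" "w = endp y st"
      using w unfolding RR_def by auto
    have y: "y \<in> {1..u}" and d: "distinct (map fst st)" and sS: "set st \<subseteq> {1..m}\<times>{1..n}"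
      using p(1) unfolding Pth_def by auto
    show ?thesis
    proof (cases "a \<in> fst ` set st")
      case False
      have "(y, st @ [(a,z)]) \<in> Pth u m n" using y d sS False a zn unfolding Pth_def by auto
      moreover have "valid G y (st @ [(a,z)])"
      proof -
        have v1: "valid G (endp y st) [(a,z)]" using zw wa za p(3) by auto
        show ?thesis unfolding valid_append using p(2) v1 by blast
      qed
      ultimately show ?thesis by (intro RR_ext) (auto simp: endp_append)
    next
      case True
      then obtain v where av: "(a,v) \<in> set st" by auto
      obtain xs ys where st: "st = xs @ (a,v) # ys" using split_list[OF av] by blast
      have "valid G y (xs @ (a,v) # ys)" using p(2) st by simp
      then have "valid G y xs \<and> valid G (endp y xs) ((a,v)#ys)" by (simp only: valid_append)
      then have vx: "valid G y xs" and e: "endp y xs \<noteq> v" "endp y xs \<in> set (G a)" by auto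
      have ax: "a \<notin> fst ` set xs" using d st by auto
      have dx: "distinct (map fst xs)" using d st by auto
      have sx: "set xs \<subseteq> {1..m}\<times>{1..n}" using sS st by auto
      show ?thesis
      proof (cases "z = endp y xs")
        case True
        show ?thesis
        proof (cases "xs = []")
          case True then show ?thesis using \<open>z = endp y xs\<close> y unfolding RR_def by auto
        next
          case False
          have "(y, xs) \<in> Pth u m n" using y dx sx False unfolding Pth_def by auto
          then show ?thesis using vx \<open>z = endp y xs\<close> by (intro RR_ext) auto
        qed
      next
        case False
        have "(y, xs @ [(a,z)]) \<in> Pth u m n" using y dx sx ax a zn unfolding Pth_def by auto
        moreover have "valid G y (xs @ [(a,z)])"
        proof -
          have v1: "valid G (endp y xs) [(a,z)]" using e False za by auto
          show ?thesis unfolding valid_append using vx v1 by blast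
        qed
        ultimately show ?thesis by (intro RR_ext) (auto simp: endp_append)
      qed
    qed
  qed
qed

lemma RR_finite: "finite (RR u m n G)"
  unfolding RR_def using Pth_finite by auto

lemma card_RR: "real (card (RR u m n G)) \<le> real u + NN G (Pth u m n)"
proof -
  have "card (RR u m n G) \<le> card {1..u} + card ((\<lambda>p. endp (fst p) (snd p)) ` {p\<in>Pth u m n. valid G (fst p) (snd p)})"
    unfolding RR_def by (rule card_Un_le)
  also have "\<dots> \<le> u + card {p\<in>Pth u m n. valid G (fst p) (snd p)}"
  proof -
    have "finite {p\<in>Pth u m n. valid G (fst p) (snd p)}" using Pth_finite by simp
    then show ?thesis using card_image_le by simp
  qed
  finally have "real (card (RR u m n G)) \<le> real u + real (card {p\<in>Pth u m n. valid G (fst p) (snd p)})" by linarith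
  moreover have "NN G (Pth u m n) = real (card {p\<in>Pth u m n. valid G (fst p) (snd p)})"
    unfolding NN_def using Pth_finite by (simp add: sum.If_cases Int_def)
  ultimately show ?thesis by simp
qed

lemma good_V:
  fixes u :: nat
  assumes G: "G \<in> configs n m k" and k: "k \<ge> 2"
  defines "V \<equiv> {1..n} - RR u m n G"
  shows "V \<subseteq> {u + 1..n}" "stopping_set k m G V" "real (card V) \<ge> real n - real u - NN G (Pth u m n)"
proof -
  show "V \<subseteq> {u + 1..n}" unfolding V_def RR_def by auto
  show "stopping_set k m G V"
    unfolding stopping_set_def
  proof
    fix a assume a: "a \<in> {1..m}"
    have ta: "set (G a) \<subseteq> {1..n}" "card (set (G a)) = k" using tuples_set[OF configs_mem[OF G a]] by auto
    show "card (set (G a) \<inter> V) \<notin> {1..k - 1}"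
    proof
      assume c: "card (set (G a) \<inter> V) \<in> {1..k - 1}"
      then have "set (G a) \<inter> V \<noteq> {}" by auto
      then obtain w where w: "w \<in> set (G a)" "w \<in> V" by auto
      have "\<not> set (G a) \<subseteq> V"
      proof
        assume "set (G a) \<subseteq> V"
        then have "set (G a) \<inter> V = set (G a)" by auto
        then show False using c ta(2) k by auto
      qed
      then obtain z where z: "z \<in> set (G a)" "z \<notin> V" by auto
      then have "z \<in> RR u m n G" using ta(1) unfolding V_def by auto
      then have "w \<in> RR u m n G" by (rule closure[OF G a _ z(1) w(1)])
      then show False using w(2) unfolding V_def by auto
    qed
  qed
  have "card {1..n} \<le> card (V \<union> RR u m n G)" unfolding V_def by (rule card_mono) (auto simp: RR_finite)
  also have "\<dots> \<le> card V + card (RR u m n G)" by (rule card_Un_le)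
  finally have "n \<le> card V + card (RR u m n G)" by simp
  then have "real n - real (card (RR u m n G)) \<le> real (card V)" by linarith
  then show "real (card V) \<ge> real n - real u - NN G (Pth u m n)" using card_RR[of u m n G] by linarith
qed


lemma geo_tail:
  fixes \<rho> :: real
  assumes I: "finite I" "\<And>L. L \<in> I \<Longrightarrow> a \<le> L" and r: "0 \<le> \<rho>" "\<rho> < 1"
  shows "(\<Sum>L\<in>I. \<rho> ^ L) \<le> \<rho> ^ a / (1 - \<rho>)"
proof -
  define f where "f i = \<rho> ^ a * \<rho> ^ i" for i :: nat
  have inj: "inj_on (\<lambda>L. L - a) I" using I(2) by (intro inj_onI) (metis le_add_diff_inverse)
  have "(\<Sum>L\<in>I. \<rho> ^ L) = (\<Sum>L\<in>I. f (L - a))"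
    by (rule sum.cong) (auto simp: f_def I(2) power_add[symmetric])
  also have "\<dots> = (\<Sum>i\<in>(\<lambda>L. L - a) ` I. f i)" by (simp add: sum.reindex[OF inj])
  also have "\<dots> \<le> suminf f"
  proof (rule sum_le_suminf)
    show "summable f" unfolding f_def using r by (intro summable_mult summable_geometric) auto
  qed (use I r in \<open>auto simp: f_def\<close>)
  also have "suminf f = \<rho> ^ a * (1 / (1 - \<rho>))"
    unfolding f_def using r by (subst suminf_mult) (auto simp: suminf_geometric)
  finally show ?thesis by simp
qed

lemma prob_bound:
  fixes n m k u L0 :: nat and \<rho> \<delta> \<tau> :: real
  assumes k: "k \<ge> 2" and n2: "n \<ge> 2" and nk: "k \<le> n" and u1: "u \<ge> 1"
    and rho: "real m * (real k * (real k - 1) / real n) \<le> \<rho>" and r0: "0 < \<rho>" and r1: "\<rho> < 1"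
    and d: "\<delta> > 0" and tau: "\<tau> \<ge> \<rho> / (1 - \<rho>) + 2 * \<delta>"
  defines "Cst \<equiv> real L0 * (real L0 * real k * real k) * (real L0 * real k + 3) ^ L0
       + 2 * real L0 * real L0 * (real L0 * real k * real k) * (real L0 * real k + 3) ^ L0 * real u / real n"
  shows "prob_cfg n m k (\<lambda>G. \<exists>V. V \<subseteq> {u + 1..n} \<and> stopping_set k m G V
                   \<and> real (card V) > real n - (1 + \<tau>) * real u)
     \<ge> 1 - (\<rho> / (1 - \<rho>) * Cst / (\<delta>\<^sup>2 * real u) + \<rho> ^ (L0 + 1) / ((1 - \<rho>) * \<delta>))"
proof -
  let ?C = "configs n m k"
  let ?good = "\<lambda>G. \<exists>V. V \<subseteq> {u + 1..n} \<and> stopping_set k m G V \<and> real (card V) > real n - (1 + \<tau>) * real u"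
  define Q1 where "Q1 = {p\<in>Pth u m n. length (snd p) \<le> L0}"
  define Q2 where "Q2 = {p\<in>Pth u m n. \<not> length (snd p) \<le> L0}"
  define W1 where "W1 = (\<Sum>q\<in>Q1. wp n k (fst q) (snd q))"
  define W2 where "W2 = (\<Sum>q\<in>Q2. wp n k (fst q) (snd q))"
  define \<tau>0 where "\<tau>0 = \<rho> / (1 - \<rho>)"
  have k1: "k \<ge> 1" using k by simp
  have fC: "finite ?C" by (rule configs_finite)
  have Z0: "real (card ?C) > 0"
  proof -
    have "card (tuples n k) > 0" by (rule tuples_card[OF nk])
    then show ?thesis by (simp add: configs_card)
  qed
  have ru: "real u > 0" using u1 by simp
  have t0: "\<tau>0 \<ge> 0" unfolding \<tau>0_def using r0 r1 by simp
  have rho1: "real m * (real k * (real k - 1) / real n) \<le> 1" using rho r1 by linarith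
  have Q1P: "Q1 \<subseteq> Pth u m n" and Q2P: "Q2 \<subseteq> Pth u m n" unfolding Q1_def Q2_def by auto
  have fQ1: "finite Q1" and fQ2: "finite Q2" using Q1P Q2P Pth_finite finite_subset by blast+
  have NNsplit: "NN G (Pth u m n) = NN G Q1 + NN G Q2" for G
  proof -
    have "Pth u m n = Q1 \<union> Q2" "Q1 \<inter> Q2 = {}" unfolding Q1_def Q2_def by auto
    then show ?thesis unfolding NN_def using fQ1 fQ2 by (simp add: sum.union_disjoint)
  qed
  have W1b: "W1 \<le> real u * \<tau>0"
  proof -
    have "W1 \<le> (\<Sum>L\<in>{1..L0}. real u * \<rho> ^ L)"
      unfolding W1_def by (rule wsum_bound[OF Q1P _ _ k1 rho]) (use r0 Pth_length in \<open>auto simp: Q1_def\<close>)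
    also have "\<dots> = real u * (\<Sum>L\<in>{1..L0}. \<rho> ^ L)" by (simp add: sum_distrib_left)
    also have "\<dots> \<le> real u * (\<rho> ^ 1 / (1 - \<rho>))"
      using geo_tail[of "{1..L0}" 1 \<rho>] r0 r1 by (intro mult_left_mono) auto
    finally show ?thesis unfolding \<tau>0_def by simp
  qed
  have W2b: "W2 \<le> real u * (\<rho> ^ (L0 + 1) / (1 - \<rho>))"
  proof -
    have "W2 \<le> (\<Sum>L\<in>{L0+1..m}. real u * \<rho> ^ L)"
      unfolding W2_def by (rule wsum_bound[OF Q2P _ _ k1 rho]) (use r0 Pth_length in \<open>force simp: Q2_def\<close>)+
    also have "\<dots> = real u * (\<Sum>L\<in>{L0+1..m}. \<rho> ^ L)" by (simp add: sum_distrib_left)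
    also have "\<dots> \<le> real u * (\<rho> ^ (L0 + 1) / (1 - \<rho>))"
      using geo_tail[of "{L0+1..m}" "L0+1" \<rho>] r0 r1 by (intro mult_left_mono) auto
    finally show ?thesis .
  qed
  have W1nn: "W1 \<ge> 0" unfolding W1_def by (rule sum_nonneg) (simp add: wp_nonneg[OF k1])
  have Cnn: "Cst \<ge> 0" unfolding Cst_def by simp
  define A1 where "A1 = {G\<in>?C. NN G Q1 \<ge> W1 + \<delta> * real u}"
  define A2 where "A2 = {G\<in>?C. NN G Q2 \<ge> \<delta> * real u}"
  have bad: "{G\<in>?C. \<not> ?good G} \<subseteq> A1 \<union> A2"
  proof
    fix G assume "G \<in> {G\<in>?C. \<not> ?good G}"
    then have G: "G \<in> ?C" and ng: "\<not> ?good G" by auto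
    show "G \<in> A1 \<union> A2"
    proof (rule ccontr)
      assume "G \<notin> A1 \<union> A2"
      then have a1: "NN G Q1 < W1 + \<delta> * real u" and a2: "NN G Q2 < \<delta> * real u"
        using G unfolding A1_def A2_def by auto
      define V where "V = {1..n} - RR u m n G"
      have gv: "V \<subseteq> {u + 1..n}" "stopping_set k m G V" "real (card V) \<ge> real n - real u - NN G (Pth u m n)"
        unfolding V_def by (rule good_V[OF G k])+
      have "NN G (Pth u m n) < real u * \<tau>0 + 2 * \<delta> * real u" using a1 a2 W1b NNsplit[of G] by linarith
      also have "\<dots> = (\<tau>0 + 2 * \<delta>) * real u" by (simp add: algebra_simps)
      also have "\<dots> \<le> \<tau> * real u" using tau ru unfolding \<tau>0_def by (intro mult_right_mono) auto
      finally have "real (card V) > real n - (1 + \<tau>) * real u" using gv(3) by (simp add: algebra_simps)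
      then show False using ng gv(1,2) by blast
    qed
  qed
  have fA: "finite A1" "finite A2" unfolding A1_def A2_def using fC by auto
  have cA1: "real (card A1) * (\<delta> * real u)\<^sup>2 \<le> real (card ?C) * W1 * Cst"
    unfolding A1_def
  proof (rule cheb[OF fC])
    show "(\<Sum>G\<in>?C. (NN G Q1)\<^sup>2) \<le> real (card ?C) * W1 * (W1 + Cst)"
      unfolding Q1_def W1_def Cst_def by (rule moment2[OF k1 n2 rho1])
    show "(\<Sum>G\<in>?C. NN G Q1) = real (card ?C) * W1" unfolding W1_def by (rule moment1[OF Q1P])
    show "\<delta> * real u > 0" using d ru by simp
  qed
  have cA2: "real (card A2) * (\<delta> * real u) \<le> real (card ?C) * W2"
  proof -
    have "real (card A2) * (\<delta> * real u) \<le> (\<Sum>G\<in>?C. NN G Q2)"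
      unfolding A2_def by (rule markov[OF fC]) (use d ru in \<open>auto simp: NN_def intro!: sum_nonneg\<close>)
    also have "\<dots> = real (card ?C) * W2" unfolding W2_def by (rule moment1[OF Q2P])
    finally show ?thesis .
  qed
  have p1: "real (card A1) / real (card ?C) \<le> \<tau>0 * Cst / (\<delta>\<^sup>2 * real u)"
  proof -
    have "real (card A1) * (\<delta> * real u)\<^sup>2 \<le> real (card ?C) * (real u * \<tau>0) * Cst"
      using cA1 W1b Cnn Z0 by (smt (verit) mult_left_mono mult_right_mono)
    then have "real (card A1) \<le> real (card ?C) * (real u * \<tau>0) * Cst / (\<delta> * real u)\<^sup>2"
      using d ru by (simp add: le_divide_eq)
    also have "\<dots> = real (card ?C) * (\<tau>0 * Cst / (\<delta>\<^sup>2 * real u))"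
      using d ru by (simp add: power2_eq_square field_simps)
    finally show ?thesis using Z0 by (simp add: divide_le_eq mult.commute)
  qed
  have p2: "real (card A2) / real (card ?C) \<le> \<rho> ^ (L0 + 1) / ((1 - \<rho>) * \<delta>)"
  proof -
    define X where "X = \<rho> ^ (L0 + 1) / (1 - \<rho>)"
    have "real (card A2) * (\<delta> * real u) \<le> real (card ?C) * (real u * X)"
      using cA2 W2b Z0 unfolding X_def by (smt (verit) mult_left_mono)
    then have "(real (card A2) * \<delta>) * real u \<le> (real (card ?C) * X) * real u"
      by (simp only: mult_ac)
    then have e: "real (card A2) * \<delta> \<le> real (card ?C) * X"
      using ru by (rule mult_right_le_imp_le)
    have "real (card A2) / real (card ?C) \<le> X / \<delta>"
      using e Z0 d by (simp add: field_simps)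
    then show ?thesis unfolding X_def by (simp add: divide_divide_eq_left)
  qed
  have cgood: "real (card {G\<in>?C. ?good G}) \<ge> real (card ?C) - real (card A1) - real (card A2)"
  proof -
    have "card ?C = card {G\<in>?C. ?good G} + card {G\<in>?C. \<not> ?good G}"
      using fC by (subst card_Un_disjoint[symmetric]) (auto intro: arg_cong[where f=card])
    moreover have "card {G\<in>?C. \<not> ?good G} \<le> card A1 + card A2"
      using card_mono[OF _ bad] card_Un_le[of A1 A2] fA by (meson finite_UnI le_trans)
    ultimately show ?thesis by linarith
  qed
  have "prob_cfg n m k ?good = real (card {G\<in>?C. ?good G}) / real (card ?C)" unfolding prob_cfg_def ..
  also have "\<dots> \<ge> 1 - (real (card A1) / real (card ?C) + real (card A2) / real (card ?C))"
  proof -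
    have "1 - (real (card A1) / real (card ?C) + real (card A2) / real (card ?C))
        = (real (card ?C) - real (card A1) - real (card A2)) / real (card ?C)"
      using Z0 by (simp add: field_simps)
    also have "\<dots> \<le> real (card {G\<in>?C. ?good G}) / real (card ?C)"
      using cgood Z0 by (intro divide_right_mono) auto
    finally show ?thesis .
  qed
  finally show ?thesis using p1 p2 unfolding \<tau>0_def by linarith
qed


lemma prob_le1: "prob_cfg n m k P \<le> 1"
proof -
  have "card {G \<in> configs n m k. P G} \<le> card (configs n m k)"
    by (rule card_mono[OF configs_finite]) auto
  then show ?thesis unfolding prob_cfg_def
    by (cases "card (configs n m k) = 0") (auto simp: divide_le_eq_1)
qed

theorem mainTheorem5:
  fixes k :: nat and u :: "nat \<Rightarrow> nat" and \<mu> \<tau> :: real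
  assumes "k \<ge> 2"
    and "filterlim (\<lambda>n. real (u n)) at_top sequentially"
    and "(\<lambda>n. real (u n) / real n) \<longlonglongrightarrow> 0"
    and "0 < \<mu>" and "\<mu> < 1 / (real k * (real k - 1))"
    and "\<tau> > real k * (real k - 1) * \<mu> / (1 - real k * (real k - 1) * \<mu>)"
  shows "(\<lambda>n. prob_cfg n (nat \<lfloor>\<mu> * real n\<rfloor>) k
            (\<lambda>G. \<exists>V. V \<subseteq> {u n + 1..n} \<and> stopping_set k (nat \<lfloor>\<mu> * real n\<rfloor>) G V
                   \<and> real (card V) > real n - (1 + \<tau>) * real (u n)))
         \<longlonglongrightarrow> 1"
proof -
  note k = assms(1) and uinf = assms(2) and mu0 = assms(4) and mu1 = assms(5) and tau = assms(6)
  define \<rho> where "\<rho> = real k * (real k - 1) * \<mu>"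
  define \<tau>0 where "\<tau>0 = \<rho> / (1 - \<rho>)"
  define \<delta> where "\<delta> = (\<tau> - \<tau>0) / 2"
  define p where "p n = prob_cfg n (nat \<lfloor>\<mu> * real n\<rfloor>) k
            (\<lambda>G. \<exists>V. V \<subseteq> {u n + 1..n} \<and> stopping_set k (nat \<lfloor>\<mu> * real n\<rfloor>) G V
                   \<and> real (card V) > real n - (1 + \<tau>) * real (u n))" for n
  have kk: "real k * (real k - 1) > 0" using k by simp
  have r0: "\<rho> > 0" unfolding \<rho>_def using kk mu0 by simp
  have r1: "\<rho> < 1" unfolding \<rho>_def using mu1 kk by (simp add: field_simps mult.commute)
  have d0: "\<delta> > 0" unfolding \<delta>_def \<tau>0_def using tau unfolding \<rho>_def by simp
  have tauE: "\<tau> \<ge> \<rho> / (1 - \<rho>) + 2 * \<delta>" unfolding \<delta>_def \<tau>0_def by (simp add: field_simps)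
  have rhon: "real (nat \<lfloor>\<mu> * real n\<rfloor>) * (real k * (real k - 1) / real n) \<le> \<rho>" if "n \<ge> 1" for n
  proof -
    have "real (nat \<lfloor>\<mu> * real n\<rfloor>) \<le> \<mu> * real n" using mu0 by simp
    then have "real (nat \<lfloor>\<mu> * real n\<rfloor>) * (real k * (real k - 1) / real n) \<le> \<mu> * real n * (real k * (real k - 1) / real n)"
      using kk that by (intro mult_right_mono) auto
    also have "\<dots> = \<rho>" unfolding \<rho>_def using that by (simp add: field_simps)
    finally show ?thesis .
  qed
  show ?thesis
    unfolding p_def[symmetric] lim_sequentially
  proof (intro allI impI)
    fix r :: real assume r: "r > 0"
    have "(\<lambda>L. \<rho> ^ L) \<longlonglongrightarrow> 0" using r0 r1 by (intro LIMSEQ_power_zero) auto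
    then have "eventually (\<lambda>L. \<rho> ^ L < r / 2 * ((1 - \<rho>) * \<delta>)) sequentially"
      using r r1 d0 by (intro order_tendstoD(2)) auto
    then obtain L1 where L1: "\<And>L. L \<ge> L1 \<Longrightarrow> \<rho> ^ L < r / 2 * ((1 - \<rho>) * \<delta>)"
      unfolding eventually_sequentially by auto
    define L0 where "L0 = L1"
    have tail: "\<rho> ^ (L0 + 1) / ((1 - \<rho>) * \<delta>) < r / 2"
      using L1[of "L0 + 1"] r1 d0 unfolding L0_def by (simp add: divide_less_eq)
    define Ca where "Ca = real L0 * (real L0 * real k * real k) * (real L0 * real k + 3) ^ L0"
    define Cb where "Cb = 2 * real L0 * real L0 * (real L0 * real k * real k) * (real L0 * real k + 3) ^ L0"
    define g where "g n = \<tau>0 / \<delta>\<^sup>2 * (Ca / real (u n) + Cb / real n)" for n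
    have uinf': "filterlim (\<lambda>n. real (u n)) at_infinity sequentially"
      using uinf by (rule filterlim_at_top_imp_at_infinity)
    have "(\<lambda>n. Ca / real (u n)) \<longlonglongrightarrow> 0" by (rule tendsto_divide_0[OF tendsto_const uinf'])
    moreover have "(\<lambda>n. Cb / real n) \<longlonglongrightarrow> 0"
      by (rule tendsto_divide_0[OF tendsto_const filterlim_at_top_imp_at_infinity[OF filterlim_real_sequentially]])
    ultimately have "g \<longlonglongrightarrow> \<tau>0 / \<delta>\<^sup>2 * (0 + 0)" unfolding g_def by (intro tendsto_intros)
    then have ev1: "eventually (\<lambda>n. g n < r / 2) sequentially" using r by (intro order_tendstoD(2)) auto
    have ev2: "eventually (\<lambda>n. real (u n) \<ge> 1) sequentially" using uinf unfolding filterlim_at_top by blast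
    have ev3: "eventually (\<lambda>n. n \<ge> max 2 k) sequentially" by (rule eventually_ge_at_top)
    have "eventually (\<lambda>n. dist (p n) 1 < r) sequentially"
      using ev1 ev2 ev3
    proof eventually_elim
      case (elim n)
      have n2: "n \<ge> 2" and nk: "k \<le> n" using elim(3) by auto
      have u1: "u n \<ge> 1" using elim(2) by simp
      have pb: "p n \<ge> 1 - (\<rho> / (1 - \<rho>) * (Ca + Cb * real (u n) / real n) / (\<delta>\<^sup>2 * real (u n)) + \<rho> ^ (L0 + 1) / ((1 - \<rho>) * \<delta>))"
        unfolding p_def Ca_def Cb_def
        by (rule prob_bound[OF k n2 nk u1 rhon r0 r1 d0 tauE]) (use n2 in simp)
      have "\<rho> / (1 - \<rho>) * (Ca + Cb * real (u n) / real n) / (\<delta>\<^sup>2 * real (u n)) = g n"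
        unfolding g_def \<tau>0_def using u1 n2 d0 by (simp add: field_simps power2_eq_square)
      then have "p n > 1 - r" using pb elim(1) tail by linarith
      moreover have "p n \<le> 1" unfolding p_def by (rule prob_le1)
      ultimately show ?case using r by (simp add: dist_real_def)
    qed
    then show "\<exists>no. \<forall>n\<ge>no. dist (p n) 1 < r" unfolding eventually_sequentially by auto
  qed
qed


end
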